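(* Let $\mathcal{R}$ be a rectangular domain of the basic hexagonal model consisting of $n$ cells, with given initial values $x(c,0),y(c,0)\in\mathbb{N}$ for every cell $c$. Suppose that at time $0$ all cells along the right boundary of $\mathcal{R}$ are on fire and all cells along the left boundary of $\mathcal{R}$ (the village) have to be protected. Let $Y$ be the maximum, over all cells $c\in\mathcal{R}$, of the sum of the $y(\cdot,0)$-values of the direct neighbours of $c$. Then the minimum integer $k$ for which a protecting path for $k$ exists can be found in time $O(n\log n\log Y)$.
   Context: Basic hexagonal model: the plane (here a rectangular region $\mathcal{R}$ of it) is partitioned into hexagonal cells; two cells are direct neighbours if they share an edge (only cells of $\mathcal{R}$ count). The state of cell $c$ at time $t\in\mathbb{N}$ is a pair of non-negative integers $x(c,t)$ (resistance against ignition) and $y(c,t)$ (remaining fuel). Cell $c$ is burning at time $t$ if $x(c,t)=0$ and $y(c,t)>0$; alive if $x(c,t)>0$ and $y(c,t)>0$; dead if $y(c,t)=0$. Transition from $t$ to $t+1$: if $c$ is alive at time $t$, then $x(c,t+1)=\max\{x(c,t)-b,0\}$ where $b$ is the number of direct neighbours of $c$ burning at time $t$; if $c$ is burning at time $t$, then $y(c,t+1)=y(c,t)-1$; all other values stay unchanged. A cell is ignited (catches fire) when its $x$-value becomes $0$; putting a cell on fire at time $0$ means setting its $x$-value to $0$ at time $0$. A separating path is a path of cells (consecutive cells are direct neighbours) in $\mathcal{R}$ connecting the lower boundary to the upper boundary of $\mathcal{R}$. A separating path $\pi$ is a protecting path for $k$ if increasing the initial $x$-value of every cell on $\pi$ by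 $k$ (leaving all other cells unchanged) ensures that, when the cells on the right boundary are put on fire at time $0$, the fire never ignites any cell of the village. Running times are measured in a model where arithmetic on the cell values takes constant time. *)

theory Defs
  imports Complex_Main
begin

text \<open>A rectangular region with h rows and w columns; a cell is (row, column).
  Row 0 is the lower boundary, row h-1 the upper boundary, column 0 the left
  boundary (the village), column w-1 the right boundary.  Hexagons are laid out
  in "odd-row offset" coordinates: odd rows are shifted half a cell to the right.\<close>

type_synonym cell = "nat \<times> nat"

definition in_region :: "nat \<Rightarrow> nat \<Rightarrow> cell \<Rightarrow> bool" where
  "in_region h w c \<longleftrightarrow> fst c < h \<and> snd c < w"

definition hex_adj :: "cell \<Rightarrow> cell \<Rightarrow> bool" where
  "hex_adj c d \<longleftrightarrow>
     (fst d = fst c \<and> (snd d = snd c + 1 \<or> snd c = snd d + 1)) \<or>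
     ((fst d = fst c + 1 \<or> fst c = fst d + 1) \<and>
        (snd d = snd c \<or> (if odd (fst c) then snd d = snd c + 1 else snd c = snd d + 1)))"

definition nbrs :: "nat \<Rightarrow> nat \<Rightarrow> cell \<Rightarrow> cell set" where
  "nbrs h w c = {d. in_region h w d \<and> hex_adj c d}"

definition burning :: "(cell \<Rightarrow> nat) \<Rightarrow> (cell \<Rightarrow> nat) \<Rightarrow> cell \<Rightarrow> bool" where
  "burning x y c \<longleftrightarrow> x c = 0 \<and> 0 < y c"

definition alive :: "(cell \<Rightarrow> nat) \<Rightarrow> (cell \<Rightarrow> nat) \<Rightarrow> cell \<Rightarrow> bool" where
  "alive x y c \<longleftrightarrow> 0 < x c \<and> 0 < y c"

text \<open>conf h w x0 y0 t = (x(.,t), y(.,t)).  Natural-number subtraction truncates,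
  so x c - b = max (x c - b) 0.\<close>
fun conf :: "nat \<Rightarrow> nat \<Rightarrow> (cell \<Rightarrow> nat) \<Rightarrow> (cell \<Rightarrow> nat) \<Rightarrow> nat
              \<Rightarrow> (cell \<Rightarrow> nat) \<times> (cell \<Rightarrow> nat)" where
  "conf h w x0 y0 0 = (x0, y0)"
| "conf h w x0 y0 (Suc t) =
     (let (x, y) = conf h w x0 y0 t in
      ((\<lambda>c. if alive x y c then x c - card {d \<in> nbrs h w c. burning x y d} else x c),
       (\<lambda>c. if burning x y c then y c - 1 else y c)))"

definition separating_path :: "nat \<Rightarrow> nat \<Rightarrow> cell list \<Rightarrow> bool" where
  "separating_path h w p \<longleftrightarrow>
     p \<noteq> [] \<and> (\<forall>c\<in>set p. in_region h w c) \<and>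
     (\<forall>i. i + 1 < length p \<longrightarrow> hex_adj (p ! i) (p ! (i + 1))) \<and>
     fst (hd p) = 0 \<and> fst (last p) = h - 1"

definition start_x :: "nat \<Rightarrow> (cell \<Rightarrow> nat) \<Rightarrow> cell list \<Rightarrow> nat \<Rightarrow> cell \<Rightarrow> nat" where
  "start_x w x0 p k = (\<lambda>c. if snd c = w - 1 then 0
                             else if c \<in> set p then x0 c + k else x0 c)"

text \<open>A cell is ignited at time t+1 when its x-value becomes 0, i.e. it was positive
  at time t and is 0 at time t+1.\<close>
definition protecting_path ::
  "nat \<Rightarrow> nat \<Rightarrow> (cell \<Rightarrow> nat) \<Rightarrow> (cell \<Rightarrow> nat) \<Rightarrow> cell list \<Rightarrow> nat \<Rightarrow> bool" where
  "protecting_path h w x0 y0 p k \<longleftrightarrow>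
     separating_path h w p \<and>
     (\<forall>t c. in_region h w c \<and> snd c = 0 \<longrightarrow>
        \<not> (0 < fst (conf h w (start_x w x0 p k) y0 t) c \<and>
           fst (conf h w (start_x w x0 p k) y0 (Suc t)) c = 0))"

definition min_protect_k :: "nat \<Rightarrow> nat \<Rightarrow> (cell \<Rightarrow> nat) \<Rightarrow> (cell \<Rightarrow> nat) \<Rightarrow> nat" where
  "min_protect_k h w x0 y0 = (LEAST k. \<exists>p. protecting_path h w x0 y0 p k)"

definition Y_bound :: "nat \<Rightarrow> nat \<Rightarrow> (cell \<Rightarrow> nat) \<Rightarrow> nat" where
  "Y_bound h w y0 = Max {(\<Sum>d\<in>nbrs h w c. y0 d) | c. in_region h w c}"

text \<open>Arithmetic: addition, subtraction, halving, comparisons -- each unit cost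
  (no multiplication of two variables, to avoid the well-known excessive power of
  unit-cost RAMs with multiplication).\<close>

datatype aexp = Num int | Reg nat | Load aexp | Add aexp aexp | Sub aexp aexp | Half aexp
datatype bexp = Less aexp aexp | Eq aexp aexp | Not bexp
datatype com = Skip | Assign nat aexp | Store aexp aexp | Seq com com
  | If bexp com com | While bexp com

type_synonym state = "(nat \<Rightarrow> int) \<times> (int \<Rightarrow> int)"

fun aval :: "aexp \<Rightarrow> state \<Rightarrow> int" where
  "aval (Num i) s = i"
| "aval (Reg r) s = fst s r"
| "aval (Load a) s = snd s (aval a s)"
| "aval (Add a b) s = aval a s + aval b s"
| "aval (Sub a b) s = aval a s - aval b s"
| "aval (Half a) s = aval a s div 2"

fun bval :: "bexp \<Rightarrow> state \<Rightarrow> bool" where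
  "bval (Less a b) s = (aval a s < aval b s)"
| "bval (Eq a b) s = (aval a s = aval b s)"
| "bval (Not b) s = (\<not> bval b s)"

inductive big_step :: "com \<Rightarrow> state \<Rightarrow> nat \<Rightarrow> state \<Rightarrow> bool" where
  "big_step Skip s 1 s"
| "big_step (Assign r a) s 1 ((fst s)(r := aval a s), snd s)"
| "big_step (Store a e) s 1 (fst s, (snd s)(aval a s := aval e s))"
| "big_step c1 s t1 s' \<Longrightarrow> big_step c2 s' t2 s'' \<Longrightarrow> big_step (Seq c1 c2) s (t1 + t2) s''"
| "bval b s \<Longrightarrow> big_step c1 s t s' \<Longrightarrow> big_step (If b c1 c2) s (Suc t) s'"
| "\<not> bval b s \<Longrightarrow> big_step c2 s t s' \<Longrightarrow> big_step (If b c1 c2) s (Suc t) s'"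
| "\<not> bval b s \<Longrightarrow> big_step (While b c) s 1 s"
| "bval b s \<Longrightarrow> big_step c s t1 s' \<Longrightarrow> big_step (While b c) s' t2 s''
     \<Longrightarrow> big_step (While b c) s (Suc (t1 + t2)) s''"

text \<open>Input encoding: all registers 0; mem[0] = h, mem[1] = w,
  mem[2 + (i*w + j)] = x(( i,j),0), mem[2 + h*w + (i*w + j)] = y((i,j),0),
  all other memory cells 0.  Output: register 0.\<close>
definition input_state :: "nat \<Rightarrow> nat \<Rightarrow> (cell \<Rightarrow> nat) \<Rightarrow> (cell \<Rightarrow> nat) \<Rightarrow> state" where
  "input_state h w x0 y0 =
     ((\<lambda>_. 0),
      (\<lambda>a. if a = 0 then int h else if a = 1 then int w
           else if 2 \<le> a \<and> a < 2 + int (h * w) then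
             (let m = nat (a - 2) in int (x0 (m div w, m mod w)))
           else if 2 + int (h * w) \<le> a \<and> a < 2 + 2 * int (h * w) then
             (let m = nat (a - 2 - int (h * w)) in int (y0 (m div w, m mod w)))
           else 0))"

end

theory Submission
  imports Defs
begin


lemma hex_adj_sym: "hex_adj c d = hex_adj d c"
  unfolding hex_adj_def by (auto split: if_splits)

lemma finite_region: "finite {c. in_region h w c}"
proof -
  have "{c. in_region h w c} = {..<h} \<times> {..<w}" by (auto simp: in_region_def)
  thus ?thesis by simp
qed

lemma finite_nbrs[simp]: "finite (nbrs h w c)"
  unfolding nbrs_def by (rule finite_subset[OF _ finite_region]) auto

locale sem =
  fixes h w :: nat and th y0 :: "cell \<Rightarrow> nat"
begin

definition "xs t = fst (conf h w th y0 t)"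
definition "ys t = snd (conf h w th y0 t)"

lemma xs0: "xs 0 = th" and ys0: "ys 0 = y0" by (simp_all add: xs_def ys_def)

lemma xs_Suc: "xs (Suc t) c = (if alive (xs t) (ys t) c then xs t c - card {d \<in> nbrs h w c. burning (xs t) (ys t) d} else xs t c)"
  by (simp add: xs_def ys_def case_prod_beta Let_def)

lemma ys_Suc: "ys (Suc t) c = (if burning (xs t) (ys t) c then ys t c - 1 else ys t c)"
  by (simp add: xs_def ys_def case_prod_beta Let_def)

abbreviation "B t d \<equiv> burning (xs t) (ys t) d"

fun cnt :: "nat \<Rightarrow> cell \<Rightarrow> nat" where
  "cnt 0 c = 0"
| "cnt (Suc t) c = cnt t c + (if B t c then 1 else 0)"

fun E :: "nat \<Rightarrow> cell \<Rightarrow> nat" where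
  "E 0 c = 0"
| "E (Suc t) c = E t c + card {d \<in> nbrs h w c. B t d}"

lemma ys_cnt: "ys t c + cnt t c = y0 c"
  by (induction t) (auto simp: ys0 ys_Suc burning_def)

lemma xs_mono_Suc: "xs (Suc t) c \<le> xs t c"
  by (simp add: xs_Suc)

lemma xs_antimono: "s \<le> t \<Longrightarrow> xs t c \<le> xs s c"
  by (induction t rule: dec_induct) (auto intro: order_trans[OF xs_mono_Suc])

lemma xs_pos_ys: "0 < xs t c \<Longrightarrow> ys t c = y0 c"
proof (induction t)
  case 0 thus ?case by (simp add: ys0)
next
  case (Suc t)
  have "0 < xs t c" using Suc.prems xs_mono_Suc[of t c] by linarith
  thus ?case using Suc by (simp add: ys_Suc burning_def)
qed

lemma E_sum: "E t c = (\<Sum>d\<in>nbrs h w c. cnt t d)"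
proof (induction t)
  case 0 thus ?case by simp
next
  case (Suc t)
  have "card {d \<in> nbrs h w c. B t d} = (\<Sum>d\<in>nbrs h w c. if B t d then 1 else 0)"
    by (simp add: sum.If_cases Int_def)
  thus ?case using Suc by (simp add: sum.distrib)
qed

lemma E_mono: "s \<le> t \<Longrightarrow> E s c \<le> E t c"
  by (induction t rule: dec_induct) (auto intro: order_trans)

lemma xs_E: "0 < y0 c \<Longrightarrow> xs t c = th c - E t c"
proof (induction t)
  case 0 thus ?case by (simp add: xs0)
next
  case (Suc t)
  show ?case
  proof (cases "0 < xs t c")
    case True
    hence "ys t c = y0 c" by (rule xs_pos_ys)
    hence "alive (xs t) (ys t) c" using True Suc.prems by (simp add: alive_def)
    thus ?thesis using Suc by (simp add: xs_Suc)
  next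
    case False
    hence "\<not> alive (xs t) (ys t) c" by (simp add: alive_def)
    thus ?thesis using Suc False by (simp add: xs_Suc)
  qed
qed

lemma xs_y0_zero: "y0 c = 0 \<Longrightarrow> xs t c = th c"
proof (induction t)
  case 0 thus ?case by (simp add: xs0)
next
  case (Suc t)
  have "ys t c = 0" using ys_cnt[of t c] Suc.prems by simp
  thus ?case using Suc by (simp add: xs_Suc alive_def)
qed


lemma ys_mono_Suc: "ys (Suc t) c \<le> ys t c"
  by (simp add: ys_Suc)

lemma ys_antimono: "s \<le> t \<Longrightarrow> ys t c \<le> ys s c"
  by (induction t rule: dec_induct) (auto intro: order_trans[OF ys_mono_Suc])

lemma cnt_pos: "0 < cnt T e \<Longrightarrow> \<exists>s<T. B s e"
  by (induction T) (auto split: if_splits intro: less_SucI)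

definition Bset :: "cell set" where
  "Bset = {d. in_region h w d \<and> 0 < y0 d \<and> (\<exists>t. xs t d = 0)}"

end

definition Phi :: "nat \<Rightarrow> nat \<Rightarrow> (cell \<Rightarrow> nat) \<Rightarrow> (cell \<Rightarrow> nat) \<Rightarrow> cell set \<Rightarrow> cell set" where
  "Phi h w th y0 X = {d. in_region h w d \<and> 0 < y0 d \<and> th d \<le> (\<Sum>e\<in>nbrs h w d \<inter> X. y0 e)}"

lemma Phi_mono: "mono (Phi h w th y0)"
proof (rule monoI)
  fix X Y :: "cell set" assume "X \<subseteq> Y"
  hence le: "\<And>d. (\<Sum>e\<in>nbrs h w d \<inter> X. y0 e) \<le> (\<Sum>e\<in>nbrs h w d \<inter> Y. y0 e)"
    by (intro sum_mono2) auto
  show "Phi h w th y0 X \<subseteq> Phi h w th y0 Y"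
  proof
    fix d assume "d \<in> Phi h w th y0 X"
    thus "d \<in> Phi h w th y0 Y" unfolding Phi_def using order_trans[OF _ le[of d]] by simp
  qed
qed

context sem begin

lemma Bset_below:
  assumes X: "Phi h w th y0 X \<subseteq> X"
  shows "in_region h w d \<Longrightarrow> 0 < y0 d \<Longrightarrow> xs t d = 0 \<Longrightarrow> d \<in> X"
proof (induction t arbitrary: d)
  case 0
  hence "th d = 0" by (simp add: xs0)
  hence "d \<in> Phi h w th y0 X" using 0 by (simp add: Phi_def)
  thus ?case using X by blast
next
  case (Suc t)
  show ?case
  proof (cases "xs t d = 0")
    case True thus ?thesis using Suc by blast
  next
    case False
    have "th d \<le> E (Suc t) d" using Suc.prems xs_E[of d "Suc t"] by simp
    also have "\<dots> = (\<Sum>e\<in>nbrs h w d. cnt (Suc t) e)" by (rule E_sum)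
    also have "\<dots> \<le> (\<Sum>e\<in>nbrs h w d. if e \<in> X then y0 e else 0)"
    proof (rule sum_mono)
      fix e assume e: "e \<in> nbrs h w d"
      show "cnt (Suc t) e \<le> (if e \<in> X then y0 e else 0)"
      proof (cases "cnt (Suc t) e = 0")
        case True thus ?thesis by simp
      next
        case False
        then obtain s where s: "s < Suc t" "B s e" using cnt_pos by blast
        hence "xs s e = 0" "0 < ys s e" by (auto simp: burning_def)
        hence "0 < y0 e" using ys_cnt[of s e] by linarith
        moreover have "xs t e = 0" using xs_antimono[of s t e] `xs s e = 0` s(1) by simp
        moreover have "in_region h w e" using e by (simp add: nbrs_def)
        ultimately have "e \<in> X" using Suc.IH by blast
        thus ?thesis using ys_cnt[of "Suc t" e] by simp
      qed
    qed
    also have "\<dots> = (\<Sum>e\<in>nbrs h w d \<inter> X. y0 e)"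
      by (simp add: sum.inter_restrict)
    finally have "d \<in> Phi h w th y0 X" using Suc.prems by (simp add: Phi_def)
    thus ?thesis using X by blast
  qed
qed

lemma burn_full:
  assumes "xs z e = 0"
  shows "\<exists>T0. \<forall>T\<ge>T0. cnt T e = y0 e"
proof -
  have z: "xs s e = 0" if "z \<le> s" for s using xs_antimono[OF that, of e] assms by simp
  have yz: "ys (z + j) e \<le> y0 e - j" for j
  proof (induction j)
    case 0 thus ?case using ys_cnt[of z e] by simp
  next
    case (Suc j)
    show ?case
    proof (cases "ys (z + j) e = 0")
      case True thus ?thesis using ys_mono_Suc[of "z+j" e] by simp
    next
      case False
      hence "B (z + j) e" using z[of "z+j"] by (simp add: burning_def)
      thus ?thesis using Suc by (simp add: ys_Suc)
    qed
  qed
  have "ys (z + y0 e) e = 0" using yz[of "y0 e"] by simp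
  have "cnt T e = y0 e" if "z + y0 e \<le> T" for T
  proof -
    have "ys T e = 0" using ys_antimono[OF that, of e] \<open>ys (z + y0 e) e = 0\<close> by simp
    thus ?thesis using ys_cnt[of T e] by simp
  qed
  thus ?thesis by blast
qed

lemma finite_ev:
  fixes P :: "'a \<Rightarrow> nat \<Rightarrow> bool"
  assumes "finite S" "\<forall>e\<in>S. \<exists>T0. \<forall>T\<ge>T0. P e T"
  shows "\<exists>T0. \<forall>e\<in>S. \<forall>T\<ge>T0. P e T"
  using assms
proof (induction S rule: finite_induct)
  case empty thus ?case by simp
next
  case (insert x F)
  have "\<forall>e\<in>F. \<exists>T0. \<forall>T\<ge>T0. P e T" using insert.prems by simp
  from insert.IH[OF this] obtain T1 where T1: "\<forall>e\<in>F. \<forall>T\<ge>T1. P e T" by (elim exE)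
  have "\<exists>T0. \<forall>T\<ge>T0. P x T" using insert.prems by simp
  then obtain T2 where T2: "\<forall>T\<ge>T2. P x T" by blast
  have "\<forall>e\<in>insert x F. \<forall>T\<ge>max T1 T2. P e T"
  proof (intro ballI allI impI)
    fix e T assume e: "e \<in> insert x F" and T: "max T1 T2 \<le> T"
    show "P e T"
    proof (cases "e = x")
      case True thus ?thesis using T2 T by simp
    next
      case False thus ?thesis using T1 T e by simp
    qed
  qed
  thus ?case by blast
qed

lemma Bset_pre: "Phi h w th y0 Bset \<subseteq> Bset"
proof
  fix d assume d: "d \<in> Phi h w th y0 Bset"
  show "d \<in> Bset"
  proof (rule ccontr)
    assume nd: "d \<notin> Bset"
    let ?S = "nbrs h w d \<inter> Bset"
    have "\<forall>e\<in>?S. \<exists>T0. \<forall>T\<ge>T0. cnt T e = y0 e"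
      using burn_full by (auto simp: Bset_def)
    from finite_ev[of ?S, OF _ this] obtain T0 where T0: "\<forall>e\<in>?S. \<forall>T\<ge>T0. cnt T e = y0 e"
      by auto
    then have T: "\<forall>e\<in>?S. cnt T0 e = y0 e" by simp
    define T where "T = T0"
    hence T: "\<forall>e\<in>?S. cnt T e = y0 e" using T by simp
    have "th d \<le> (\<Sum>e\<in>?S. y0 e)" using d by (simp add: Phi_def)
    also have "\<dots> = (\<Sum>e\<in>?S. cnt T e)" using T by simp
    also have "\<dots> \<le> (\<Sum>e\<in>nbrs h w d. cnt T e)" by (intro sum_mono2) auto
    also have "\<dots> = E T d" by (simp add: E_sum)
    finally have "xs T d = 0" using xs_E[of d T] d by (simp add: Phi_def)
    thus False using nd d unfolding Bset_def Phi_def by blast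
  qed
qed

lemma Bset_lfp: "Bset = lfp (Phi h w th y0)"
proof
  show "lfp (Phi h w th y0) \<subseteq> Bset" using lfp_lowerbound[of "Phi h w th y0" Bset] Bset_pre by blast
  show "Bset \<subseteq> lfp (Phi h w th y0)"
  proof
    fix d assume "d \<in> Bset"
    then obtain t where "in_region h w d" "0 < y0 d" "xs t d = 0" by (auto simp: Bset_def)
    moreover have "Phi h w th y0 (lfp (Phi h w th y0)) \<subseteq> lfp (Phi h w th y0)"
      using lfp_unfold[OF Phi_mono, of h w th y0] by simp
    ultimately show "d \<in> lfp (Phi h w th y0)"
      using Bset_below[of "lfp (Phi h w th y0)"] by blast
  qed
qed

lemma ignite_iff:
  "(\<exists>t. 0 < xs t v \<and> xs (Suc t) v = 0) \<longleftrightarrow> 0 < th v \<and> 0 < y0 v \<and> (\<exists>t. xs t v = 0)"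
proof
  assume "\<exists>t. 0 < xs t v \<and> xs (Suc t) v = 0"
  then obtain t where t: "0 < xs t v" "xs (Suc t) v = 0" by blast
  have "0 < y0 v" using xs_y0_zero[of v] t by (cases "y0 v = 0") auto
  moreover have "0 < th v" using xs_antimono[of 0 t v] t by (simp add: xs0)
  ultimately show "0 < th v \<and> 0 < y0 v \<and> (\<exists>t. xs t v = 0)" using t by blast
next
  assume a: "0 < th v \<and> 0 < y0 v \<and> (\<exists>t. xs t v = 0)"
  then obtain t where t: "xs t v = 0" by blast
  have "\<exists>s. 0 < xs s v \<and> xs (Suc s) v = 0" if "xs t v = 0" for t
    using that
  proof (induction t)
    case 0 thus ?case using a by (simp add: xs0)
  next
    case (Suc t) thus ?case by (cases "xs t v = 0") auto
  qed
  thus "\<exists>t. 0 < xs t v \<and> xs (Suc t) v = 0" using t by blast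
qed

end


lemma hd_upt': "a < b \<Longrightarrow> hd [a..<b] = a" by (simp add: upt_conv_Cons)
lemma last_upt': "a < b \<Longrightarrow> last [a..<b] = b - 1"
proof -
  assume "a < b"
  then obtain c where c: "b = Suc c" "a \<le> c" by (cases b) auto
  thus ?thesis by simp
qed

lemma succ_upt: "(\<And>x. P x (Suc x)) \<Longrightarrow> successively P [a..<b]"
  by (simp add: successively_conv_nth)

definition seg :: "nat \<Rightarrow> cell set \<Rightarrow> nat \<Rightarrow> cell list" where
  "seg w E i = (if (i,0) \<in> E then [] else [(i,1),(i,0)]) @ map (Pair i) [1..<w] @ rev (map (Pair i) [1..<w-1])"

lemma seg_props:
  assumes "2 \<le> w"
  shows "successively hex_adj (seg w E i)" "seg w E i \<noteq> []" "hd (seg w E i) = (i,1)" "last (seg w E i) = (i,1)"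
    "E \<subseteq> {c. snd c = 0} \<Longrightarrow> set (seg w E i) = {c. fst c = i \<and> snd c < w} - E"
proof -
  let ?D = "(if (i,0) \<in> E then [] else [(i,1),(i,0)])"
  let ?M = "map (Pair i) [1..<w]"
  let ?R = "rev (map (Pair i) [1..<w-1])"
  have sM: "successively hex_adj ?M"
    unfolding successively_map by (rule succ_upt) (simp add: hex_adj_def)
  have sR: "successively hex_adj ?R"
    unfolding successively_rev successively_map by (rule succ_upt) (simp add: hex_adj_def)
  have M: "?M \<noteq> []" "hd ?M = (i,1)" "last ?M = (i, w-1)" using assms by (auto simp: hd_map last_map)
  have R: "?R \<noteq> [] \<Longrightarrow> hd ?R = (i, w-2)" "?R = [] \<or> last ?R = (i,1)"
  proof -
    show "?R \<noteq> [] \<Longrightarrow> hd ?R = (i, w-2)"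
      using last_upt'[of 1 "w-1"] by (auto simp: hd_rev last_map)
    show "?R = [] \<or> last ?R = (i,1)"
    proof (cases "w - 1 \<le> 1")
      case True thus ?thesis by simp
    next
      case False
      hence "[1..<w-1] \<noteq> []" "hd [1..<w-1] = 1" using hd_upt'[of 1 "w-1"] by auto
      thus ?thesis by (simp add: last_rev hd_map)
    qed
  qed
  have j1: "?R \<noteq> [] \<Longrightarrow> hex_adj (last ?M) (hd ?R)" using M R assms by (auto simp: hex_adj_def)
  have sMR: "successively hex_adj (?M @ ?R)" using sM sR j1 by (auto simp: successively_append_iff)
  have MR: "?M @ ?R \<noteq> []" "hd (?M @ ?R) = (i,1)" "last (?M @ ?R) = (i,1)"
    using M R assms by (cases "w = 2"; auto)+
  have "successively hex_adj (?D @ (?M @ ?R))"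
    using sMR MR by (auto simp: successively_append_iff hex_adj_def)
  thus "successively hex_adj (seg w E i)" by (simp add: seg_def)
  show "seg w E i \<noteq> []" "hd (seg w E i) = (i,1)" "last (seg w E i) = (i,1)"
    using MR by (auto simp: seg_def)
  show "E \<subseteq> {c. snd c = 0} \<Longrightarrow> set (seg w E i) = {c. fst c = i \<and> snd c < w} - E"
  proof -
    assume E: "E \<subseteq> {c. snd c = 0}"
    show ?thesis
    proof (intro set_eqI iffI)
      fix c assume "c \<in> set (seg w E i)" thus "c \<in> {c. fst c = i \<and> snd c < w} - E"
        using assms E by (auto simp: seg_def split: if_splits)
    next
      fix c assume c: "c \<in> {c. fst c = i \<and> snd c < w} - E"
      obtain a b where ab: "c = (a,b)" by (cases c)
      show "c \<in> set (seg w E i)"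
      proof (cases "b = 0")
        case True thus ?thesis using c ab by (auto simp: seg_def)
      next
        case False thus ?thesis using c ab by (auto simp: seg_def image_iff)
      qed
    qed
  qed
qed


definition pth :: "nat \<Rightarrow> cell set \<Rightarrow> nat \<Rightarrow> cell list" where
  "pth w E n = concat (map (seg w E) [0..<n])"

lemma pth_props:
  assumes w: "2 \<le> w" and E: "E \<subseteq> {c. snd c = 0}"
  shows "successively hex_adj (pth w E (Suc m)) \<and> pth w E (Suc m) \<noteq> [] \<and> hd (pth w E (Suc m)) = (0,1)
    \<and> last (pth w E (Suc m)) = (m,1) \<and> set (pth w E (Suc m)) = {c. fst c < Suc m \<and> snd c < w} - E"
proof (induction m)
  case 0
  show ?case using seg_props[OF w, of E 0] E by (auto simp: pth_def)
next
  case (Suc m)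
  have e: "pth w E (Suc (Suc m)) = pth w E (Suc m) @ seg w E (Suc m)" by (simp add: pth_def)
  have s: "successively hex_adj (pth w E (Suc m) @ seg w E (Suc m))"
    using Suc seg_props[OF w, of E "Suc m"] by (auto simp: successively_append_iff hex_adj_def)
  have st: "set (pth w E (Suc m) @ seg w E (Suc m)) = {c. fst c < Suc (Suc m) \<and> snd c < w} - E"
    using Suc seg_props[OF w, of E "Suc m"] E by (auto simp: less_Suc_eq)
  show ?case unfolding e using s st Suc seg_props[OF w, of E "Suc m"] by auto
qed

lemma pth_sep:
  assumes w: "2 \<le> w" and E: "E \<subseteq> {c. snd c = 0}" and h: "1 \<le> h"
  shows "separating_path h w (pth w E h)" "set (pth w E h) = {c. in_region h w c} - E"
proof -
  obtain m where m: "h = Suc m" using h by (cases h) auto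
  note P = pth_props[OF w E, of m]
  show "separating_path h w (pth w E h)"
    using P unfolding separating_path_def m successively_conv_nth by (auto simp: in_region_def)
  show "set (pth w E h) = {c. in_region h w c} - E"
    using P unfolding m by (auto simp: in_region_def)
qed

lemma col_sep:
  assumes h: "1 \<le> h"
  shows "separating_path h 1 (map (\<lambda>i. (i,0)) [0..<h])"
proof -
  have "successively hex_adj (map (\<lambda>i. (i,0::nat)) [0..<h])"
    unfolding successively_map by (rule succ_upt) (simp add: hex_adj_def)
  moreover have "hd [0..<h] = 0" "last [0..<h] = h - 1" using h hd_upt' last_upt' by auto
  ultimately show ?thesis using h unfolding separating_path_def successively_conv_nth
    by (auto simp: in_region_def hd_map last_map)
qed


definition thk :: "nat \<Rightarrow> (cell \<Rightarrow> nat) \<Rightarrow> nat \<Rightarrow> cell \<Rightarrow> nat" where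
  "thk w x0 k c = (if snd c = w - 1 then 0 else x0 c + k)"

definition Good :: "nat \<Rightarrow> nat \<Rightarrow> (cell \<Rightarrow> nat) \<Rightarrow> (cell \<Rightarrow> nat) \<Rightarrow> nat \<Rightarrow> bool" where
  "Good h w x0 y0 k \<longleftrightarrow> (\<forall>v. in_region h w v \<and> snd v = 0 \<and> 0 < x0 v \<and> 0 < y0 v \<longrightarrow>
      v \<notin> lfp (Phi h w (thk w x0 k) y0))"

lemma lfp_anti:
  assumes "\<forall>c. in_region h w c \<longrightarrow> th c \<le> th' c"
  shows "lfp (Phi h w th' y0) \<subseteq> lfp (Phi h w th y0)"
proof (rule lfp_lowerbound)
  have "Phi h w th' y0 (lfp (Phi h w th y0)) \<subseteq> Phi h w th y0 (lfp (Phi h w th y0))"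
    using assms unfolding Phi_def by (auto intro: order_trans)
  also have "\<dots> = lfp (Phi h w th y0)" using lfp_unfold[OF Phi_mono, of h w th y0] by simp
  finally show "Phi h w th' y0 (lfp (Phi h w th y0)) \<subseteq> lfp (Phi h w th y0)" .
qed

lemma lfp_mem:
  assumes "v \<in> lfp (Phi h w th y0)"
  shows "in_region h w v \<and> 0 < y0 v \<and> th v \<le> (\<Sum>e\<in>nbrs h w v \<inter> lfp (Phi h w th y0). y0 e)"
proof -
  have "v \<in> Phi h w th y0 (lfp (Phi h w th y0))" using assms lfp_unfold[OF Phi_mono, of h w th y0] by simp
  thus ?thesis by (simp add: Phi_def)
qed

lemma prot_char:
  "protecting_path h w x0 y0 p k \<longleftrightarrow> separating_path h w p \<and>
     (\<forall>v. in_region h w v \<and> snd v = 0 \<longrightarrow>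
        \<not> (0 < start_x w x0 p k v \<and> 0 < y0 v \<and> v \<in> lfp (Phi h w (start_x w x0 p k) y0)))"
proof -
  interpret sem h w "start_x w x0 p k" y0 .
  have "\<And>v. in_region h w v \<Longrightarrow> (\<exists>t. 0 < xs t v \<and> xs (Suc t) v = 0) \<longleftrightarrow>
     (0 < start_x w x0 p k v \<and> 0 < y0 v \<and> v \<in> lfp (Phi h w (start_x w x0 p k) y0))"
    using ignite_iff Bset_lfp by (auto simp: Bset_def)
  thus ?thesis unfolding protecting_path_def xs_def by blast
qed

lemma Good_mono: "k \<le> k' \<Longrightarrow> Good h w x0 y0 k \<Longrightarrow> Good h w x0 y0 k'"
proof -
  assume "k \<le> k'" "Good h w x0 y0 k"
  moreover have "lfp (Phi h w (thk w x0 k') y0) \<subseteq> lfp (Phi h w (thk w x0 k) y0)"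
    using \<open>k \<le> k'\<close> by (intro lfp_anti) (simp add: thk_def)
  ultimately show ?thesis unfolding Good_def by blast
qed

lemma nbr_sum_le_Y:
  assumes "in_region h w v"
  shows "(\<Sum>e\<in>nbrs h w v. y0 e) \<le> Y_bound h w y0"
proof -
  have "{(\<Sum>d\<in>nbrs h w c. y0 d) | c. in_region h w c} = (\<lambda>c. \<Sum>d\<in>nbrs h w c. y0 d) ` {c. in_region h w c}"
    by auto
  hence "finite {(\<Sum>d\<in>nbrs h w c. y0 d) | c. in_region h w c}" using finite_region by simp
  moreover have "(\<Sum>e\<in>nbrs h w v. y0 e) \<in> {(\<Sum>d\<in>nbrs h w c. y0 d) | c. in_region h w c}"
    using assms by blast
  ultimately show ?thesis unfolding Y_bound_def by (rule Max_ge)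
qed

lemma Good_Y:
  assumes w: "2 \<le> w"
  shows "Good h w x0 y0 (Y_bound h w y0)"
  unfolding Good_def
proof (intro allI impI notI)
  fix v assume v: "in_region h w v \<and> snd v = 0 \<and> 0 < x0 v \<and> 0 < y0 v"
    and L: "v \<in> lfp (Phi h w (thk w x0 (Y_bound h w y0)) y0)"
  have "thk w x0 (Y_bound h w y0) v = x0 v + Y_bound h w y0" using v w by (simp add: thk_def)
  also have "\<dots> \<le> (\<Sum>e\<in>nbrs h w v \<inter> lfp (Phi h w (thk w x0 (Y_bound h w y0)) y0). y0 e)"
    using lfp_mem[OF L] calculation by simp
  also have "\<dots> \<le> (\<Sum>e\<in>nbrs h w v. y0 e)" by (intro sum_mono2) auto
  also have "\<dots> \<le> Y_bound h w y0" using nbr_sum_le_Y v by blast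
  finally show False using v w by (simp add: thk_def)
qed

lemma exists_prot_iff:
  assumes w: "2 \<le> w" and h: "1 \<le> h"
  shows "(\<exists>p. protecting_path h w x0 y0 p k) \<longleftrightarrow> Good h w x0 y0 k"
proof
  assume "\<exists>p. protecting_path h w x0 y0 p k"
  then obtain p where p: "protecting_path h w x0 y0 p k" by blast
  let ?th = "start_x w x0 p k"
  have sub: "lfp (Phi h w (thk w x0 k) y0) \<subseteq> lfp (Phi h w ?th y0)"
    by (intro lfp_anti) (simp add: thk_def start_x_def)
  show "Good h w x0 y0 k" unfolding Good_def
  proof (intro allI impI notI)
    fix v assume v: "in_region h w v \<and> snd v = 0 \<and> 0 < x0 v \<and> 0 < y0 v"
      and L: "v \<in> lfp (Phi h w (thk w x0 k) y0)"
    have "0 < ?th v" using v w by (simp add: start_x_def)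
    thus False using p v L sub unfolding prot_char by blast
  qed
next
  assume G: "Good h w x0 y0 k"
  let ?L = "lfp (Phi h w (thk w x0 k) y0)"
  define E where "E = {v. snd v = 0 \<and> x0 v = 0 \<and> v \<in> ?L}"
  have E0: "E \<subseteq> {c. snd c = 0}" by (auto simp: E_def)
  let ?p = "pth w E h"
  have sep: "separating_path h w ?p" and setp: "set ?p = {c. in_region h w c} - E"
    using pth_sep[OF w E0 h] by auto
  let ?th = "start_x w x0 ?p k"
  have L1: "?L \<subseteq> lfp (Phi h w ?th y0)"
    by (intro lfp_anti) (simp add: thk_def start_x_def)
  have L2: "lfp (Phi h w ?th y0) \<subseteq> ?L"
  proof (rule lfp_lowerbound, rule subsetI)
    fix d assume d: "d \<in> Phi h w ?th y0 ?L"
    show "d \<in> ?L"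
    proof (cases "d \<in> E")
      case True thus ?thesis by (simp add: E_def)
    next
      case False
      have "in_region h w d" using d by (simp add: Phi_def)
      hence "?th d = thk w x0 k d" using False setp by (simp add: start_x_def thk_def)
      hence "d \<in> Phi h w (thk w x0 k) y0 ?L" using d by (simp add: Phi_def)
      thus ?thesis using lfp_unfold[OF Phi_mono, of h w "thk w x0 k" y0] by simp
    qed
  qed
  have "protecting_path h w x0 y0 ?p k" unfolding prot_char
  proof (intro conjI sep allI impI notI)
    fix v assume v: "in_region h w v \<and> snd v = 0"
      and bad: "0 < ?th v \<and> 0 < y0 v \<and> v \<in> lfp (Phi h w ?th y0)"
    hence vL: "v \<in> ?L" using L2 by blast
    have nf: "snd v \<noteq> w - 1" using v w by simp
    show False
    proof (cases "v \<in> E")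
      case True
      hence "?th v = 0" using setp nf by (simp add: start_x_def E_def)
      thus False using bad by simp
    next
      case False
      show False
      proof (cases "x0 v = 0")
        case True thus False using False v vL by (simp add: E_def)
      next
        case False
        have "v \<notin> ?L" using G v False bad unfolding Good_def by blast
        thus False using vL by blast
      qed
    qed
  qed
  thus "\<exists>p. protecting_path h w x0 y0 p k" by blast
qed

lemma min_k_w1:
  assumes h: "1 \<le> h"
  shows "min_protect_k h 1 x0 y0 = 0"
proof -
  let ?p = "map (\<lambda>i. (i,0)) [0..<h]"
  have "protecting_path h 1 x0 y0 ?p 0" unfolding prot_char
    using col_sep[OF h] by (auto simp: start_x_def)
  thus ?thesis unfolding min_protect_k_def by (intro Least_eq_0) blast
qed

lemma min_k_Good:
  assumes w: "2 \<le> w" and h: "1 \<le> h"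
  shows "min_protect_k h w x0 y0 = (LEAST k. Good h w x0 y0 k)"
  unfolding min_protect_k_def using exists_prot_iff[OF w h] by simp


definition runs :: "com \<Rightarrow> state \<Rightarrow> (nat \<Rightarrow> state \<Rightarrow> bool) \<Rightarrow> bool" where
  "runs c s Q \<longleftrightarrow> (\<exists>t s'. big_step c s t s' \<and> Q t s')"

inductive_cases SkipE: "big_step Skip s t s'"
inductive_cases AssignE: "big_step (Assign r a) s t s'"
inductive_cases StoreE: "big_step (Store a e) s t s'"
inductive_cases SeqE: "big_step (Seq c1 c2) s t s'"
inductive_cases IfE: "big_step (If b c1 c2) s t s'"

lemma runs_Skip[simp]: "runs Skip s Q \<longleftrightarrow> Q 1 s"
proof
  assume "runs Skip s Q"
  then obtain t s' where b: "big_step Skip s t s'" and q: "Q t s'" unfolding runs_def by blast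
  from b have "t = 1 \<and> s' = s" by (auto elim: SkipE)
  thus "Q 1 s" using q by simp
next
  assume "Q 1 s" thus "runs Skip s Q" unfolding runs_def by (blast intro: big_step.intros)
qed

lemma runs_Assign[simp]: "runs (Assign r a) s Q \<longleftrightarrow> Q 1 ((fst s)(r := aval a s), snd s)"
proof
  assume "runs (Assign r a) s Q"
  then obtain t s' where b: "big_step (Assign r a) s t s'" and q: "Q t s'" unfolding runs_def by blast
  from b have "t = 1 \<and> s' = ((fst s)(r := aval a s), snd s)" by (auto elim: AssignE)
  thus "Q 1 ((fst s)(r := aval a s), snd s)" using q by simp
next
  assume "Q 1 ((fst s)(r := aval a s), snd s)" thus "runs (Assign r a) s Q" unfolding runs_def by (blast intro: big_step.intros)
qed

lemma runs_Store[simp]: "runs (Store a e) s Q \<longleftrightarrow> Q 1 (fst s, (snd s)(aval a s := aval e s))"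
proof
  assume "runs (Store a e) s Q"
  then obtain t s' where b: "big_step (Store a e) s t s'" and q: "Q t s'" unfolding runs_def by blast
  from b have "t = 1 \<and> s' = (fst s, (snd s)(aval a s := aval e s))" by (auto elim: StoreE)
  thus "Q 1 (fst s, (snd s)(aval a s := aval e s))" using q by simp
next
  assume "Q 1 (fst s, (snd s)(aval a s := aval e s))" thus "runs (Store a e) s Q" unfolding runs_def by (blast intro: big_step.intros)
qed

lemma runs_Seq[simp]: "runs (Seq c1 c2) s Q \<longleftrightarrow> runs c1 s (\<lambda>t1 s1. runs c2 s1 (\<lambda>t2 s2. Q (t1 + t2) s2))"
proof
  assume "runs (Seq c1 c2) s Q" thus "runs c1 s (\<lambda>t1 s1. runs c2 s1 (\<lambda>t2 s2. Q (t1 + t2) s2))"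
    unfolding runs_def by (blast elim: SeqE)
next
  assume "runs c1 s (\<lambda>t1 s1. runs c2 s1 (\<lambda>t2 s2. Q (t1 + t2) s2))" thus "runs (Seq c1 c2) s Q"
    unfolding runs_def by (blast intro: big_step.intros)
qed

lemma runs_If[simp]: "runs (If b c1 c2) s Q \<longleftrightarrow>
   (if bval b s then runs c1 s (\<lambda>t. Q (Suc t)) else runs c2 s (\<lambda>t. Q (Suc t)))"
proof (cases "bval b s")
  case True
  show ?thesis
  proof
    show "runs (If b c1 c2) s Q \<Longrightarrow> if bval b s then runs c1 s (\<lambda>t. Q (Suc t)) else runs c2 s (\<lambda>t. Q (Suc t))"
    proof -
      assume "runs (If b c1 c2) s Q"
      then obtain t s' where bb: "big_step (If b c1 c2) s t s'" and q: "Q t s'" unfolding runs_def by blast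
      from bb True obtain t' where "t = Suc t'" "big_step c1 s t' s'" by (auto elim: IfE)
      thus ?thesis using q True unfolding runs_def by (simp del: split_paired_Ex; blast)
    qed
  next
    assume "if bval b s then runs c1 s (\<lambda>t. Q (Suc t)) else runs c2 s (\<lambda>t. Q (Suc t))"
    thus "runs (If b c1 c2) s Q" using True unfolding runs_def by (auto intro: big_step.intros)
  qed
next
  case False
  show ?thesis
  proof
    show "runs (If b c1 c2) s Q \<Longrightarrow> if bval b s then runs c1 s (\<lambda>t. Q (Suc t)) else runs c2 s (\<lambda>t. Q (Suc t))"
    proof -
      assume "runs (If b c1 c2) s Q"
      then obtain t s' where bb: "big_step (If b c1 c2) s t s'" and q: "Q t s'" unfolding runs_def by blast
      from bb False obtain t' where "t = Suc t'" "big_step c2 s t' s'" by (auto elim: IfE)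
      thus ?thesis using q False unfolding runs_def by (simp del: split_paired_Ex; blast)
    qed
  next
    assume "if bval b s then runs c1 s (\<lambda>t. Q (Suc t)) else runs c2 s (\<lambda>t. Q (Suc t))"
    thus "runs (If b c1 c2) s Q" using False unfolding runs_def by (auto intro: big_step.intros)
  qed
qed

lemma runs_mono: "runs c s Q \<Longrightarrow> (\<And>t s'. Q t s' \<Longrightarrow> Q' t s') \<Longrightarrow> runs c s Q'"
  unfolding runs_def by blast

lemma runs_While:
  assumes "I s"
    and body: "\<And>s. I s \<Longrightarrow> bval b s \<Longrightarrow> runs c s (\<lambda>t s'. I s' \<and> t + 1 + P s' \<le> P s)"
  shows "runs (While b c) s (\<lambda>t s'. I s' \<and> \<not> bval b s' \<and> t \<le> P s + 1)"
  using assms(1)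
proof (induction "P s" arbitrary: s rule: less_induct)
  case less
  show ?case
  proof (cases "bval b s")
    case False
    hence "big_step (While b c) s 1 s" by (rule big_step.intros)
    thus ?thesis using less.prems False unfolding runs_def by (intro exI[of _ 1] exI[of _ s]) simp
  next
    case True
    obtain t1 s1 where 1: "big_step c s t1 s1" "I s1" "t1 + 1 + P s1 \<le> P s"
      using body[OF less.prems True] unfolding runs_def by blast
    have "P s1 < P s" using 1 by simp
    then obtain t2 s2 where 2: "big_step (While b c) s1 t2 s2" "I s2" "\<not> bval b s2" "t2 \<le> P s1 + 1"
      using less.hyps[of s1] 1(2) unfolding runs_def by blast
    have "big_step (While b c) s (Suc (t1 + t2)) s2" using True 1(1) 2(1) by (rule big_step.intros)
    moreover have "Suc (t1 + t2) \<le> P s + 1" using 1(3) 2(4) by simp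
    ultimately show ?thesis using 2 unfolding runs_def by blast
  qed
qed

lemma runs_exists: "runs c s Q \<Longrightarrow> \<exists>t s'. big_step c s t s' \<and> Q t s'"
  unfolding runs_def by blast


fun nbl :: "nat \<Rightarrow> nat \<Rightarrow> cell \<Rightarrow> cell list" where
  "nbl h w (i,j) = (if j+1 < w then [(i,j+1)] else []) @ (if 0 < j then [(i,j-1)] else []) @
     (if i+1 < h then [(i+1,j)] else []) @ (if 0 < i then [(i-1,j)] else []) @
     (if odd i then (if j+1 < w \<and> i+1 < h then [(i+1,j+1)] else []) @ (if j+1 < w \<and> 0 < i then [(i-1,j+1)] else [])
      else (if 0 < j \<and> i+1 < h then [(i+1,j-1)] else []) @ (if 0 < j \<and> 0 < i then [(i-1,j-1)] else []))"

lemma nbl_set1: "in_region h w (i,j) \<Longrightarrow> set (nbl h w (i,j)) \<subseteq> nbrs h w (i,j)"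
  by (auto simp: nbrs_def in_region_def hex_adj_def split: if_splits)
lemma nbl_set2: assumes "in_region h w (i,j)" shows "nbrs h w (i,j) \<subseteq> set (nbl h w (i,j))"
proof
  fix d assume d: "d \<in> nbrs h w (i,j)"
  obtain a b where ab: "d = (a,b)" by (cases d)
  have r: "a < h" "b < w" using d ab by (auto simp: nbrs_def in_region_def)
  have adj: "(a = i \<and> (b = j + 1 \<or> j = b + 1)) \<or> ((a = i + 1 \<or> i = a + 1) \<and> (b = j \<or> (if odd i then b = j + 1 else j = b + 1)))"
    using d ab by (cases "odd i") (auto simp: nbrs_def hex_adj_def)
  show "d \<in> set (nbl h w (i,j))"
  proof (cases "odd i")
    case True
    thus ?thesis using adj r ab by (auto simp del: nbl.simps simp: nbl.simps[of h w i j])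
  next
    case False
    thus ?thesis using adj r ab by (auto simp del: nbl.simps simp: nbl.simps[of h w i j])
  qed
qed

lemma nbl_set: "in_region h w c \<Longrightarrow> set (nbl h w c) = nbrs h w c"
  using nbl_set1[of h w "fst c" "snd c"] nbl_set2[of h w "fst c" "snd c"] by auto

lemma nbl_distinct: "distinct (nbl h w c)"
  by (cases c) auto

lemma nbrs_sym: "d \<in> nbrs h w c \<Longrightarrow> in_region h w c \<Longrightarrow> c \<in> nbrs h w d"
  by (simp add: nbrs_def hex_adj_sym)

type_synonym ast = "(cell \<Rightarrow> nat) \<times> cell set \<times> cell list"

locale algo =
  fixes h w :: nat and x0 y0 :: "cell \<Rightarrow> nat" and k :: nat
  assumes w2: "2 \<le> w"
begin

abbreviation "th \<equiv> thk w x0 k"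
abbreviation "R \<equiv> {c. in_region h w c}"
abbreviation "L \<equiv> lfp (Phi h w th y0)"

definition vis :: "cell \<Rightarrow> cell \<Rightarrow> ast \<Rightarrow> ast" where
  "vis c d st = (case st of (acc, mark, stk) \<Rightarrow>
     (let a' = acc(d := acc d + y0 c) in
      if d \<notin> mark \<and> 0 < y0 d \<and> x0 d + k \<le> a' d then (a', insert d mark, stk @ [d]) else (a', mark, stk)))"

definition step :: "ast \<Rightarrow> ast" where
  "step st = (case st of (acc, mark, stk) \<Rightarrow>
     fold (vis (last stk)) (nbl h w (last stk)) (acc, mark, butlast stk))"

definition Inv :: "ast \<Rightarrow> bool" where
  "Inv st \<longleftrightarrow> (case st of (acc, mark, stk) \<Rightarrow>
     mark \<subseteq> L \<and> mark \<subseteq> R \<and> set stk \<subseteq> mark \<and> distinct stk \<and>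
     (\<forall>d\<in>R. acc d = (\<Sum>e\<in>nbrs h w d \<inter> (mark - set stk). y0 e)) \<and>
     (\<forall>d\<in>R. d \<notin> mark \<longrightarrow> \<not> (0 < y0 d \<and> th d \<le> acc d)) \<and>
     (\<forall>d\<in>R. snd d = w - 1 \<and> 0 < y0 d \<longrightarrow> d \<in> mark))"

definition J :: "cell \<Rightarrow> cell set \<Rightarrow> ast \<Rightarrow> bool" where
  "J c D st \<longleftrightarrow> (case st of (acc, mark, stk) \<Rightarrow>
     mark \<subseteq> L \<and> mark \<subseteq> R \<and> set stk \<subseteq> mark \<and> distinct stk \<and> c \<in> mark \<and> c \<notin> set stk \<and>
     (\<forall>d\<in>R. acc d = (\<Sum>e\<in>nbrs h w d \<inter> (mark - set stk - {c}). y0 e) + (if d \<in> D then y0 c else 0)) \<and>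
     (\<forall>d\<in>R. d \<notin> mark \<longrightarrow> d \<in> nbrs h w c - D \<or> \<not> (0 < y0 d \<and> th d \<le> acc d)) \<and>
     (\<forall>d\<in>R. snd d = w - 1 \<and> 0 < y0 d \<longrightarrow> d \<in> mark))"

lemma L_unfold: "Phi h w th y0 L = L"
  using lfp_unfold[OF Phi_mono, of h w th y0] by simp

lemma th_le: "th d \<le> x0 d + k" by (simp add: thk_def)

lemma sum_insert_c:
  assumes "c \<in> nbrs h w d" "c \<notin> S"
  shows "(\<Sum>e\<in>nbrs h w d \<inter> insert c S. y0 e) = (\<Sum>e\<in>nbrs h w d \<inter> S. y0 e) + y0 c"
proof -
  have "nbrs h w d \<inter> insert c S = insert c (nbrs h w d \<inter> S)" using assms by auto
  thus ?thesis using assms by simp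
qed

lemma adj_irrefl: "\<not> hex_adj c c" by (simp add: hex_adj_def)

lemma vis_J:
  assumes J: "J c D st" and d: "d \<in> nbrs h w c" "d \<notin> D" and c: "c \<in> R"
  shows "J c (insert d D) (vis c d st)"
proof -
  obtain acc mark stk where st: "st = (acc, mark, stk)" by (cases st)
  let ?a = "acc(d := acc d + y0 c)"
  have dR: "d \<in> R" using d by (simp add: nbrs_def)
  have cd: "c \<in> nbrs h w d" using nbrs_sym d c by simp
  have dc: "d \<noteq> c" using d adj_irrefl[of c] by (auto simp: nbrs_def)
  have JJ: "mark \<subseteq> L \<and> mark \<subseteq> R \<and> set stk \<subseteq> mark \<and> distinct stk \<and> c \<in> mark \<and> c \<notin> set stk \<and>
     (\<forall>d\<in>R. acc d = (\<Sum>e\<in>nbrs h w d \<inter> (mark - set stk - {c}). y0 e) + (if d \<in> D then y0 c else 0)) \<and>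
     (\<forall>d\<in>R. d \<notin> mark \<longrightarrow> d \<in> nbrs h w c - D \<or> \<not> (0 < y0 d \<and> th d \<le> acc d)) \<and>
     (\<forall>d\<in>R. snd d = w - 1 \<and> 0 < y0 d \<longrightarrow> d \<in> mark)" using J unfolding J_def st prod.case by blast
  have J1: "mark \<subseteq> L" and J2: "mark \<subseteq> R" and J3: "set stk \<subseteq> mark" and J4: "distinct stk"
    and J5: "c \<in> mark" and J6: "c \<notin> set stk"
    and J7: "\<forall>d\<in>R. acc d = (\<Sum>e\<in>nbrs h w d \<inter> (mark - set stk - {c}). y0 e) + (if d \<in> D then y0 c else 0)"
    and J8: "\<forall>d\<in>R. d \<notin> mark \<longrightarrow> d \<in> nbrs h w c - D \<or> \<not> (0 < y0 d \<and> th d \<le> acc d)"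
    and J9: "\<forall>d\<in>R. snd d = w - 1 \<and> 0 < y0 d \<longrightarrow> d \<in> mark"
    using JJ by blast+
  have acc': "\<forall>e\<in>R. ?a e = (\<Sum>e'\<in>nbrs h w e \<inter> (mark - set stk - {c}). y0 e') + (if e \<in> insert d D then y0 c else 0)"
  proof
    fix e assume e: "e \<in> R"
    show "?a e = (\<Sum>e'\<in>nbrs h w e \<inter> (mark - set stk - {c}). y0 e') + (if e \<in> insert d D then y0 c else 0)"
    proof (cases "e = d")
      case True thus ?thesis using bspec[OF J7 e] d(2) by simp
    next
      case False thus ?thesis using bspec[OF J7 e] by simp
    qed
  qed
  show ?thesis
  proof (cases "d \<notin> mark \<and> 0 < y0 d \<and> x0 d + k \<le> ?a d")
    case True
    have v: "vis c d st = (?a, insert d mark, stk @ [d])" using True by (simp add: vis_def st Let_def)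
    have "th d \<le> ?a d" using True th_le[of d] by linarith
    also have "?a d = (\<Sum>e\<in>nbrs h w d \<inter> (mark - set stk - {c}). y0 e) + y0 c" using bspec[OF acc' dR] by simp
    also have "\<dots> = (\<Sum>e\<in>nbrs h w d \<inter> insert c (mark - set stk - {c}). y0 e)"
      using sum_insert_c[OF cd, of "mark - set stk - {c}"] by simp
    also have "\<dots> \<le> (\<Sum>e\<in>nbrs h w d \<inter> L. y0 e)"
      using J1 J5 by (intro sum_mono2) auto
    finally have "d \<in> Phi h w th y0 L" using dR True by (simp add: Phi_def)
    hence dL: "d \<in> L" using L_unfold by simp
    have ms: "insert d mark - set (stk @ [d]) - {c} = mark - set stk - {c}" using True by auto
    have dS: "d \<notin> set stk" using True J3 by auto
    have K8: "\<forall>e\<in>R. e \<notin> insert d mark \<longrightarrow> e \<in> nbrs h w c - insert d D \<or> \<not> (0 < y0 e \<and> th e \<le> ?a e)"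
      using J8 by auto
    have K7: "\<forall>e\<in>R. ?a e = (\<Sum>e'\<in>nbrs h w e \<inter> (insert d mark - set (stk @ [d]) - {c}). y0 e') + (if e \<in> insert d D then y0 c else 0)"
      using acc' unfolding ms .
    show ?thesis unfolding v J_def prod.case
      using J1 J2 J3 J4 J5 J6 J9 dL dR dS dc K7 K8 by auto
  next
    case False
    have v: "vis c d st = (?a, mark, stk)" using False by (simp add: vis_def st Let_def)
    have nb: "\<forall>e\<in>R. e \<notin> mark \<longrightarrow> e \<in> nbrs h w c - insert d D \<or> \<not> (0 < y0 e \<and> th e \<le> ?a e)"
    proof (intro ballI impI)
      fix e assume e: "e \<in> R" "e \<notin> mark"
      show "e \<in> nbrs h w c - insert d D \<or> \<not> (0 < y0 e \<and> th e \<le> ?a e)"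
      proof (cases "e = d")
        case True
        have "\<not> (0 < y0 d \<and> th d \<le> ?a d)"
        proof
          assume a: "0 < y0 d \<and> th d \<le> ?a d"
          show False
          proof (cases "snd d = w - 1")
            case True
            have "d \<in> mark" using J9 dR a True by blast
            thus False using e \<open>e = d\<close> by simp
          next
            case nf: False
            hence "th d = x0 d + k" by (simp add: thk_def)
            thus False using a False e \<open>e = d\<close> by auto
          qed
        qed
        thus ?thesis using True by simp
      next
        case False
        have "e \<in> nbrs h w c - D \<or> \<not> (0 < y0 e \<and> th e \<le> acc e)" using J8 e by blast
        thus ?thesis using False by simp
      qed
    qed
    show ?thesis unfolding v J_def prod.case
      using J1 J2 J3 J4 J5 J6 J9 acc' nb by blast
  qed
qed

lemma fold_vis_J:
  assumes "J c D st" "set ds \<subseteq> nbrs h w c" "distinct ds" "set ds \<inter> D = {}" "c \<in> R"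
  shows "J c (D \<union> set ds) (fold (vis c) ds st)"
  using assms
proof (induction ds arbitrary: D st)
  case Nil thus ?case by simp
next
  case (Cons d ds)
  have "J c (insert d D) (vis c d st)" using Cons.prems by (intro vis_J) auto
  hence "J c (insert d D \<union> set ds) (fold (vis c) ds (vis c d st))"
    using Cons.prems by (intro Cons.IH) auto
  thus ?case by simp
qed

lemma Inv_J:
  assumes "Inv (acc, mark, stk)" "stk \<noteq> []"
  shows "J (last stk) {} (acc, mark, butlast stk)"
proof -
  let ?c = "last stk" and ?b = "butlast stk"
  have st: "stk = ?b @ [?c]" using assms(2) by simp
  have I: "mark \<subseteq> L \<and> mark \<subseteq> R \<and> set stk \<subseteq> mark \<and> distinct stk \<and>
     (\<forall>d\<in>R. acc d = (\<Sum>e\<in>nbrs h w d \<inter> (mark - set stk). y0 e)) \<and>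
     (\<forall>d\<in>R. d \<notin> mark \<longrightarrow> \<not> (0 < y0 d \<and> th d \<le> acc d)) \<and>
     (\<forall>d\<in>R. snd d = w - 1 \<and> 0 < y0 d \<longrightarrow> d \<in> mark)" using assms(1) unfolding Inv_def prod.case by blast
  have I1: "mark \<subseteq> L" and I2: "mark \<subseteq> R" and I3: "set stk \<subseteq> mark" and I4: "distinct stk"
    and I5: "\<forall>d\<in>R. acc d = (\<Sum>e\<in>nbrs h w d \<inter> (mark - set stk). y0 e)"
    and I6: "\<forall>d\<in>R. d \<notin> mark \<longrightarrow> \<not> (0 < y0 d \<and> th d \<le> acc d)"
    and I7: "\<forall>d\<in>R. snd d = w - 1 \<and> 0 < y0 d \<longrightarrow> d \<in> mark" using I by blast+
  have ss: "set stk = insert ?c (set ?b)" using st by (metis Un_insert_right append_Nil2 list.set(2) set_append)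
  have "distinct (?b @ [?c])" using I4 st by simp
  hence db: "distinct ?b" "?c \<notin> set ?b" by auto
  have eq: "mark - set ?b - {?c} = mark - set stk" using ss by auto
  have K7: "\<forall>d\<in>R. acc d = (\<Sum>e\<in>nbrs h w d \<inter> (mark - set ?b - {?c}). y0 e) + (if d \<in> {} then y0 ?c else 0)"
    using I5 unfolding eq by simp
  have K8: "\<forall>d\<in>R. d \<notin> mark \<longrightarrow> d \<in> nbrs h w ?c - {} \<or> \<not> (0 < y0 d \<and> th d \<le> acc d)" using I6 by blast
  have "set ?b \<subseteq> mark" "?c \<in> mark" using I3 ss by auto
  thus ?thesis unfolding J_def prod.case using I1 I2 db K7 K8 I7 by blast
qed

lemma J_Inv:
  assumes "J c (nbrs h w c) st" "c \<in> R"
  shows "Inv st"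
proof -
  obtain acc mark stk where st: "st = (acc, mark, stk)" by (cases st)
  have JJ: "mark \<subseteq> L \<and> mark \<subseteq> R \<and> set stk \<subseteq> mark \<and> distinct stk \<and> c \<in> mark \<and> c \<notin> set stk \<and>
     (\<forall>d\<in>R. acc d = (\<Sum>e\<in>nbrs h w d \<inter> (mark - set stk - {c}). y0 e) + (if d \<in> nbrs h w c then y0 c else 0)) \<and>
     (\<forall>d\<in>R. d \<notin> mark \<longrightarrow> d \<in> nbrs h w c - nbrs h w c \<or> \<not> (0 < y0 d \<and> th d \<le> acc d)) \<and>
     (\<forall>d\<in>R. snd d = w - 1 \<and> 0 < y0 d \<longrightarrow> d \<in> mark)" using assms(1) unfolding J_def st prod.case by blast
  have J1: "mark \<subseteq> L" and J2: "mark \<subseteq> R" and J3: "set stk \<subseteq> mark" and J4: "distinct stk"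
    and J5: "c \<in> mark" and J6: "c \<notin> set stk"
    and J7: "\<forall>d\<in>R. acc d = (\<Sum>e\<in>nbrs h w d \<inter> (mark - set stk - {c}). y0 e) + (if d \<in> nbrs h w c then y0 c else 0)"
    and J8: "\<forall>d\<in>R. d \<notin> mark \<longrightarrow> d \<in> nbrs h w c - nbrs h w c \<or> \<not> (0 < y0 d \<and> th d \<le> acc d)"
    and J9: "\<forall>d\<in>R. snd d = w - 1 \<and> 0 < y0 d \<longrightarrow> d \<in> mark"
    using JJ by blast+
  have K5: "\<forall>d\<in>R. acc d = (\<Sum>e\<in>nbrs h w d \<inter> (mark - set stk). y0 e)"
  proof
    fix d assume d: "d \<in> R"
    have a: "acc d = (\<Sum>e\<in>nbrs h w d \<inter> (mark - set stk - {c}). y0 e) + (if d \<in> nbrs h w c then y0 c else 0)"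
      using bspec[OF J7 d] .
    show "acc d = (\<Sum>e\<in>nbrs h w d \<inter> (mark - set stk). y0 e)"
    proof (cases "d \<in> nbrs h w c")
      case True
      hence cd: "c \<in> nbrs h w d" using nbrs_sym assms(2) by simp
      have "mark - set stk = insert c (mark - set stk - {c})" using J5 J6 by auto
      hence "(\<Sum>e\<in>nbrs h w d \<inter> (mark - set stk). y0 e) = (\<Sum>e\<in>nbrs h w d \<inter> (mark - set stk - {c}). y0 e) + y0 c"
        using sum_insert_c[OF cd, of "mark - set stk - {c}"] by simp
      thus ?thesis using a True by simp
    next
      case False
      hence "c \<notin> nbrs h w d" using nbrs_sym[of c h w d] d by auto
      hence "nbrs h w d \<inter> (mark - set stk - {c}) = nbrs h w d \<inter> (mark - set stk)" by auto
      thus ?thesis using a False by simp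
    qed
  qed
  have K6: "\<forall>d\<in>R. d \<notin> mark \<longrightarrow> \<not> (0 < y0 d \<and> th d \<le> acc d)" using J8 by blast
  show ?thesis unfolding Inv_def st prod.case using J1 J2 J3 J4 K5 K6 J9 by blast
qed

lemma step_Inv:
  assumes "Inv st" "snd (snd st) \<noteq> []"
  shows "Inv (step st)"
proof -
  obtain acc mark stk where st: "st = (acc, mark, stk)" by (cases st)
  let ?c = "last stk"
  have ne: "stk \<noteq> []" using assms st by simp
  have "set stk \<subseteq> mark" "mark \<subseteq> R" using assms(1) unfolding st Inv_def prod.case by blast+
  hence cR: "?c \<in> R" using ne last_in_set[OF ne] by blast
  have "J ?c {} (acc, mark, butlast stk)" using Inv_J assms ne st by simp
  hence "J ?c ({} \<union> set (nbl h w ?c)) (fold (vis ?c) (nbl h w ?c) (acc, mark, butlast stk))"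
    using cR nbl_set nbl_distinct by (intro fold_vis_J) auto
  hence "J ?c (nbrs h w ?c) (step st)" using nbl_set cR by (simp add: step_def st)
  thus ?thesis using J_Inv cR by blast
qed

definition pot :: "ast \<Rightarrow> nat" where
  "pot st = (case st of (acc, mark, stk) \<Rightarrow> length stk + card (R - mark))"

lemma vis_pot:
  assumes "mark \<subseteq> R" "set stk \<subseteq> mark" "d \<in> R"
  shows "pot (vis c d (acc, mark, stk)) = pot (acc, mark, stk)"
    and "case vis c d (acc, mark, stk) of (a', m', s') \<Rightarrow> m' \<subseteq> R \<and> set s' \<subseteq> m'"
proof -
  have fin: "finite (R - mark)" using finite_region by auto
  show "pot (vis c d (acc, mark, stk)) = pot (acc, mark, stk)"
  proof (cases "d \<notin> mark \<and> 0 < y0 d \<and> x0 d + k \<le> acc d + y0 c")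
    case True
    have v: "vis c d (acc, mark, stk) = (acc(d := acc d + y0 c), insert d mark, stk @ [d])"
      using True by (simp add: vis_def Let_def)
    have "R - insert d mark = (R - mark) - {d}" by auto
    moreover have "d \<in> R - mark" using True assms(3) by simp
    ultimately have "card (R - mark) = Suc (card (R - insert d mark))"
      using card.remove[OF fin, of d] by simp
    thus ?thesis unfolding v pot_def by simp
  next
    case False
    have v: "vis c d (acc, mark, stk) = (acc(d := acc d + y0 c), mark, stk)"
      using False by (auto simp: vis_def Let_def)
    thus ?thesis unfolding v pot_def by simp
  qed
  show "case vis c d (acc, mark, stk) of (a', m', s') \<Rightarrow> m' \<subseteq> R \<and> set s' \<subseteq> m'"
    using assms by (auto simp: vis_def Let_def)
qed

lemma fold_vis_pot:
  assumes "mark \<subseteq> R" "set stk \<subseteq> mark" "set ds \<subseteq> R"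
  shows "pot (fold (vis c) ds (acc, mark, stk)) = pot (acc, mark, stk)"
  using assms
proof (induction ds arbitrary: acc mark stk)
  case Nil thus ?case by simp
next
  case (Cons d ds)
  obtain a' m' s' where v: "vis c d (acc, mark, stk) = (a', m', s')" by (cases "vis c d (acc, mark, stk)")
  have "pot (a', m', s') = pot (acc, mark, stk)" "m' \<subseteq> R \<and> set s' \<subseteq> m'"
    using vis_pot[OF Cons.prems(1,2), of d c acc] Cons.prems(3) v by auto
  moreover have "pot (fold (vis c) ds (a', m', s')) = pot (a', m', s')"
    using Cons.prems(3) calculation(2) by (intro Cons.IH) auto
  ultimately show ?case using v by simp
qed

lemma step_pot:
  assumes "Inv st" "snd (snd st) \<noteq> []"
  shows "pot (step st) + 1 = pot st"
proof -
  obtain acc mark stk where st: "st = (acc, mark, stk)" by (cases st)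
  have ne: "stk \<noteq> []" using assms st by simp
  have I: "mark \<subseteq> R" "set stk \<subseteq> mark" using assms(1) st by (auto simp: Inv_def)
  have "set (butlast stk) \<subseteq> mark" using I(2) by (meson in_set_butlastD subset_iff)
  moreover have "last stk \<in> R" using I ne last_in_set[OF ne] by blast
  moreover have "set (nbl h w (last stk)) \<subseteq> R" using nbl_set[of h w "last stk"] calculation(2)
    by (auto simp: nbrs_def)
  ultimately have "pot (step st) = pot (acc, mark, butlast stk)"
    unfolding step_def st prod.case using fold_vis_pot[OF I(1)] by blast
  thus ?thesis using ne by (simp add: pot_def st)
qed

lemma Inv_final:
  assumes "Inv (acc, mark, [])"
  shows "mark = L"
proof -
  have I: "mark \<subseteq> L \<and> mark \<subseteq> R \<and> set ([]::cell list) \<subseteq> mark \<and> distinct ([]::cell list) \<and>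
     (\<forall>d\<in>R. acc d = (\<Sum>e\<in>nbrs h w d \<inter> (mark - set ([]::cell list)). y0 e)) \<and>
     (\<forall>d\<in>R. d \<notin> mark \<longrightarrow> \<not> (0 < y0 d \<and> th d \<le> acc d)) \<and>
     (\<forall>d\<in>R. snd d = w - 1 \<and> 0 < y0 d \<longrightarrow> d \<in> mark)" using assms unfolding Inv_def prod.case by blast
  have I1: "mark \<subseteq> L" and I5': "\<forall>d\<in>R. acc d = (\<Sum>e\<in>nbrs h w d \<inter> (mark - set ([]::cell list)). y0 e)"
    and I6: "\<forall>d\<in>R. d \<notin> mark \<longrightarrow> \<not> (0 < y0 d \<and> th d \<le> acc d)" using I by blast+
  have I5: "\<forall>d\<in>R. acc d = (\<Sum>e\<in>nbrs h w d \<inter> mark. y0 e)" using I5' by simp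
  have "Phi h w th y0 mark \<subseteq> mark"
  proof
    fix d assume d: "d \<in> Phi h w th y0 mark"
    hence dR: "d \<in> R" by (simp add: Phi_def)
    show "d \<in> mark"
    proof (rule ccontr)
      assume "d \<notin> mark"
      hence "\<not> (0 < y0 d \<and> th d \<le> acc d)" using I6 dR by blast
      moreover have "acc d = (\<Sum>e\<in>nbrs h w d \<inter> mark. y0 e)" using I5 dR by blast
      ultimately show False using d by (simp add: Phi_def)
    qed
  qed
  hence "L \<subseteq> mark" by (rule lfp_lowerbound)
  thus ?thesis using I1 by blast
qed

definition S0 :: "cell set" where
  "S0 = {c. in_region h w c \<and> 0 < y0 c \<and> th c = 0}"

lemma Inv_init:
  assumes "set stk = S0" "distinct stk"
  shows "Inv ((\<lambda>_. 0), S0, stk)"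
proof -
  have "S0 \<subseteq> L"
  proof
    fix c assume c: "c \<in> S0"
    hence "c \<in> Phi h w th y0 L" by (simp add: S0_def Phi_def)
    thus "c \<in> L" using L_unfold by simp
  qed
  moreover have "\<forall>d\<in>R. snd d = w - 1 \<and> 0 < y0 d \<longrightarrow> d \<in> S0" by (auto simp: S0_def thk_def)
  ultimately show ?thesis using assms unfolding Inv_def by (auto simp: S0_def)
qed

lemma Good_iff_mark:
  assumes "mark = L"
  shows "Good h w x0 y0 k \<longleftrightarrow> (\<forall>v\<in>R. snd v = 0 \<and> 0 < x0 v \<and> 0 < y0 v \<longrightarrow> v \<notin> mark)"
  using assms unfolding Good_def by auto

end


definition ad :: "nat \<Rightarrow> int \<Rightarrow> int" where "ad j m = -1 - int j - 5 * m"
definition AD :: "nat \<Rightarrow> aexp \<Rightarrow> aexp" where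
  "AD j e = Sub (Num (-1 - int j)) (Add e (Add e (Add e (Add e e))))"

lemma aval_AD[simp]: "aval (AD j e) s = ad j (aval e s)"
  by (simp add: AD_def ad_def)

lemma ad_eq_iff[simp]: "j < 5 \<Longrightarrow> j' < 5 \<Longrightarrow> ad j m = ad j' m' \<longleftrightarrow> j = j' \<and> m = m'"
  unfolding ad_def by presburger

lemma ad_neg: "0 \<le> m \<Longrightarrow> ad j m < 0" by (simp add: ad_def)

definition XA :: "aexp \<Rightarrow> aexp" where "XA e = Add (Num 2) e"
definition YA :: "aexp \<Rightarrow> aexp" where "YA e = Add (Add (Num 2) (Reg 3)) e"

lemma aval_XA[simp]: "aval (XA e) s = 2 + aval e s" by (simp add: XA_def)
lemma aval_YA[simp]: "aval (YA e) s = 2 + fst s 3 + aval e s" by (simp add: YA_def)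

definition PUSH :: com where
  "PUSH = Seq (Store (AD 1 (Reg 12)) (Num 1)) (Seq (Store (AD 2 (Reg 9)) (Reg 12)) (Assign 9 (Add (Reg 9) (Num 1))))"

definition VISIT :: "aexp \<Rightarrow> com" where
  "VISIT e = Seq (Assign 12 e) (Seq (Store (AD 0 (Reg 12)) (Add (Load (AD 0 (Reg 12))) (Load (YA (Reg 10)))))
     (If (Eq (Load (AD 1 (Reg 12))) (Num 0))
        (If (Less (Num 0) (Load (YA (Reg 12))))
           (If (Less (Load (AD 0 (Reg 12))) (Add (Load (XA (Reg 12))) (Reg 5))) Skip PUSH) Skip) Skip))"

definition ROWc :: aexp where "ROWc = Load (AD 3 (Reg 10))"
definition COLc :: aexp where "COLc = Load (AD 4 (Reg 10))"

definition G1 :: "bexp \<Rightarrow> aexp \<Rightarrow> com" where "G1 b e = If b (VISIT e) Skip"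
definition G2 :: "bexp \<Rightarrow> bexp \<Rightarrow> aexp \<Rightarrow> com" where "G2 b1 b2 e = If b1 (If b2 (VISIT e) Skip) Skip"

definition NB :: com where
  "NB = Seq (G1 (Less (Add COLc (Num 1)) (Reg 2)) (Add (Reg 10) (Num 1)))
       (Seq (G1 (Less (Num 0) COLc) (Sub (Reg 10) (Num 1)))
       (Seq (G1 (Less (Add ROWc (Num 1)) (Reg 1)) (Add (Reg 10) (Reg 2)))
       (Seq (G1 (Less (Num 0) ROWc) (Sub (Reg 10) (Reg 2)))
       (If (Eq (Sub ROWc (Add (Half ROWc) (Half ROWc))) (Num 1))
          (Seq (G2 (Less (Add COLc (Num 1)) (Reg 2)) (Less (Add ROWc (Num 1)) (Reg 1)) (Add (Add (Reg 10) (Reg 2)) (Num 1)))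
               (G2 (Less (Add COLc (Num 1)) (Reg 2)) (Less (Num 0) ROWc) (Add (Sub (Reg 10) (Reg 2)) (Num 1))))
          (Seq (G2 (Less (Num 0) COLc) (Less (Add ROWc (Num 1)) (Reg 1)) (Sub (Add (Reg 10) (Reg 2)) (Num 1)))
               (G2 (Less (Num 0) COLc) (Less (Num 0) ROWc) (Sub (Sub (Reg 10) (Reg 2)) (Num 1))))))))"

definition WLBODY :: com where
  "WLBODY = Seq (Assign 9 (Sub (Reg 9) (Num 1))) (Seq (Assign 10 (Load (AD 2 (Reg 9)))) NB)"
definition WL :: com where
  "WL = While (Less (Num 0) (Reg 9)) WLBODY"

definition SEED :: com where
  "SEED = Seq (Store (AD 1 (Reg 6)) (Num 1)) (Seq (Store (AD 2 (Reg 9)) (Reg 6)) (Assign 9 (Add (Reg 9) (Num 1))))"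
definition RBODY :: com where
  "RBODY = Seq (Store (AD 0 (Reg 6)) (Num 0)) (Seq (Store (AD 1 (Reg 6)) (Num 0))
     (Seq (If (Less (Num 0) (Load (YA (Reg 6))))
            (If (Eq (Load (AD 4 (Reg 6))) (Sub (Reg 2) (Num 1))) SEED
               (If (Eq (Add (Load (XA (Reg 6))) (Reg 5)) (Num 0)) SEED Skip)) Skip)
      (Assign 6 (Add (Reg 6) (Num 1)))))"
definition RESET :: com where
  "RESET = Seq (Assign 6 (Num 0)) (Seq (Assign 9 (Num 0)) (While (Less (Reg 6) (Reg 3)) RBODY))"

definition CBODY :: com where
  "CBODY = Seq (If (Eq (Load (AD 4 (Reg 6))) (Num 0))
      (If (Less (Num 0) (Load (XA (Reg 6))))
        (If (Less (Num 0) (Load (YA (Reg 6))))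
          (If (Eq (Load (AD 1 (Reg 6))) (Num 1)) (Assign 11 (Num 0)) Skip) Skip) Skip) Skip)
    (Assign 6 (Add (Reg 6) (Num 1)))"
definition CHECK :: com where
  "CHECK = Seq (Assign 11 (Num 1)) (Seq (Assign 6 (Num 0)) (While (Less (Reg 6) (Reg 3)) CBODY))"
definition GOOD :: com where
  "GOOD = Seq RESET (Seq WL CHECK)"

definition BSBODY :: com where
  "BSBODY = Seq (Assign 5 (Half (Add (Reg 0) (Reg 4))))
     (Seq GOOD (If (Eq (Reg 11) (Num 1)) (Assign 4 (Reg 5)) (Assign 0 (Add (Reg 5) (Num 1)))))"
definition BS :: com where
  "BS = Seq (Assign 0 (Num 0)) (While (Less (Reg 0) (Reg 4)) BSBODY)"

fun bits :: "nat \<Rightarrow> nat" where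
  "bits d = (if d = 0 then 0 else Suc (bits (d div 2)))"

declare bits.simps[simp del]

lemma bits_mono: "a \<le> b \<Longrightarrow> bits a \<le> bits b"
proof (induction b arbitrary: a rule: less_induct)
  case (less b)
  show ?case
  proof (cases "a = 0")
    case True thus ?thesis by (simp add: bits.simps)
  next
    case False
    hence "bits (a div 2) \<le> bits (b div 2)" using less by (intro less.IH) auto
    thus ?thesis using False less.prems by (subst bits.simps, subst (2) bits.simps) simp
  qed
qed

lemma bits_log: "0 < d \<Longrightarrow> real (bits d) \<le> log 2 (real d) + 1"
proof (induction d rule: less_induct)
  case (less d)
  show ?case
  proof (cases "d = 1")
    case True thus ?thesis by (simp add: bits.simps)
  next
    case False
    hence d2: "d div 2 > 0" "d div 2 < d" using less.prems by auto
    have "real (bits d) = 1 + real (bits (d div 2))" using less.prems by (subst bits.simps) simp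
    also have "\<dots> \<le> 1 + (log 2 (real (d div 2)) + 1)" using less.IH[OF d2(2) d2(1)] by simp
    also have "log 2 (real (d div 2)) + 1 = log 2 (2 * real (d div 2))"
      using d2 by (simp add: log_mult)
    also have "\<dots> \<le> log 2 (real d)" using d2 by (intro log_le_cancel_iff[THEN iffD2]) linarith+
    finally show ?thesis by simp
  qed
qed

definition PBODY :: com where
  "PBODY = Seq (Store (AD 3 (Reg 6)) (Reg 7)) (Seq (Store (AD 4 (Reg 6)) (Reg 8))
     (Seq (Assign 4 (Add (Reg 4) (Load (YA (Reg 6))))) (Seq (Assign 6 (Add (Reg 6) (Num 1)))
     (Seq (Assign 8 (Add (Reg 8) (Num 1)))
       (If (Eq (Reg 8) (Reg 2)) (Seq (Assign 8 (Num 0)) (Assign 7 (Add (Reg 7) (Num 1)))) Skip)))))"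
definition PREP :: com where
  "PREP = Seq (Assign 6 (Num 0)) (Seq (Assign 7 (Num 0)) (Seq (Assign 8 (Num 0)) (Seq (Assign 4 (Num 0))
     (While (Less (Reg 6) (Reg 3)) PBODY))))"
definition NLOOP :: com where
  "NLOOP = Seq (Assign 7 (Num 0)) (Seq (Assign 3 (Num 0))
     (While (Less (Reg 7) (Reg 1)) (Seq (Assign 3 (Add (Reg 3) (Reg 2))) (Assign 7 (Add (Reg 7) (Num 1))))))"
definition MAIN :: com where
  "MAIN = Seq NLOOP (Seq PREP BS)"
definition PROG :: com where
  "PROG = Seq (Assign 1 (Load (Num 0))) (Seq (Assign 2 (Load (Num 1))) (If (Eq (Reg 2) (Num 1)) Skip MAIN))"

locale ram =
  fixes h w :: nat and x0 y0 :: "cell \<Rightarrow> nat"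
  assumes w2: "2 \<le> w" and h1: "1 \<le> h"
begin

abbreviation "n \<equiv> h * w"
abbreviation "R \<equiv> {c. in_region h w c}"

definition idx :: "cell \<Rightarrow> nat" where "idx c = fst c * w + snd c"
definition cel :: "nat \<Rightarrow> cell" where "cel m = (m div w, m mod w)"

lemma w0: "0 < w" using w2 by simp

lemma algo_w: "algo w" using w2 by (simp add: algo_def)

lemmas vis_def' = algo.vis_def[OF algo_w]

lemma idx_lt: "c \<in> R \<Longrightarrow> idx c < n"
proof -
  assume "c \<in> R"
  hence "fst c < h" "snd c < w" by (auto simp: in_region_def)
  hence "fst c * w + snd c < (fst c + 1) * w" by simp
  also have "\<dots> \<le> h * w" using \<open>fst c < h\<close> by (intro mult_right_mono) auto
  finally show ?thesis by (simp add: idx_def)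
qed

lemma cel_idx[simp]: "c \<in> R \<Longrightarrow> cel (idx c) = c"
  by (cases c) (auto simp: cel_def idx_def in_region_def)

lemma cel_R: "m < n \<Longrightarrow> cel m \<in> R"
  using w0 by (auto simp: cel_def in_region_def less_mult_imp_div_less)

lemma idx_cel[simp]: "idx (cel m) = m"
  by (simp add: cel_def idx_def)

lemma idx_inj: "c \<in> R \<Longrightarrow> d \<in> R \<Longrightarrow> idx c = idx d \<longleftrightarrow> c = d"
  by (metis cel_idx)

lemma idx_div[simp]: "c \<in> R \<Longrightarrow> idx c div w = fst c" and idx_mod[simp]: "c \<in> R \<Longrightarrow> idx c mod w = snd c"
proof -
  assume "c \<in> R"
  hence "(idx c div w, idx c mod w) = c" using cel_idx[of c] by (simp add: cel_def)
  thus "idx c div w = fst c" by (metis fst_conv)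
next
  assume "c \<in> R"
  hence "(idx c div w, idx c mod w) = c" using cel_idx[of c] by (simp add: cel_def)
  thus "idx c mod w = snd c" by (metis snd_conv)
qed

definition base :: "state \<Rightarrow> bool" where
  "base s \<longleftrightarrow> fst s 1 = int h \<and> fst s 2 = int w \<and> fst s 3 = int n \<and>
     (\<forall>m<n. snd s (2 + int m) = int (x0 (cel m)) \<and> snd s (2 + int n + int m) = int (y0 (cel m)))"

definition rc :: "state \<Rightarrow> bool" where
  "rc s \<longleftrightarrow> (\<forall>m<n. snd s (ad 3 (int m)) = int (m div w) \<and> snd s (ad 4 (int m)) = int (m mod w))"

lemma base_reg[simp]: "q \<noteq> 1 \<Longrightarrow> q \<noteq> 2 \<Longrightarrow> q \<noteq> 3 \<Longrightarrow> base (f(q := v), mm) = base (f, mm)"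
  by (simp add: base_def)

lemma base_mem[simp]: "0 \<le> x \<Longrightarrow> base (f, mm(ad j x := v)) = base (f, mm)"
proof -
  assume x: "0 \<le> x"
  have "0 \<le> int h * int w" by simp
  hence "\<And>m. 2 + int m \<noteq> ad j x" "\<And>m. 2 + int h * int w + int m \<noteq> ad j x" using ad_neg[OF x, of j] by linarith+
  thus ?thesis by (simp add: base_def)
qed

lemma rc_reg[simp]: "rc (f(q := v), mm) = rc (f, mm)"
  by (simp add: rc_def)

lemma rc_mem[simp]: "j < 3 \<Longrightarrow> rc (f, mm(ad j x := v)) = rc (f, mm)"
  by (simp add: rc_def)

lemma base_X: "base s \<Longrightarrow> c \<in> R \<Longrightarrow> snd s (2 + int (idx c)) = int (x0 c)"
  unfolding base_def using idx_lt[of c] by auto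

lemma base_Y: "base s \<Longrightarrow> c \<in> R \<Longrightarrow> snd s (2 + fst s 3 + int (idx c)) = int (y0 c)"
  unfolding base_def using idx_lt[of c] by auto

lemma rc_row: "rc s \<Longrightarrow> c \<in> R \<Longrightarrow> snd s (ad 3 (int (idx c))) = int (fst c)"
  unfolding rc_def using idx_lt[of c] by auto

lemma rc_col: "rc s \<Longrightarrow> c \<in> R \<Longrightarrow> snd s (ad 4 (int (idx c))) = int (snd c)"
  unfolding rc_def using idx_lt[of c] by auto

definition wrel :: "int \<Rightarrow> int \<Rightarrow> nat \<Rightarrow> state \<Rightarrow> ast \<Rightarrow> bool" where
  "wrel lo hi k s st \<longleftrightarrow> (case st of (acc, mark, stk) \<Rightarrow>
     base s \<and> rc s \<and> fst s 0 = lo \<and> fst s 4 = hi \<and> fst s 5 = int k \<and> fst s 9 = int (length stk) \<and>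
     (\<forall>c\<in>R. snd s (ad 0 (int (idx c))) = int (acc c) \<and> snd s (ad 1 (int (idx c))) = (if c \<in> mark then 1 else 0)) \<and>
     (\<forall>q<length stk. snd s (ad 2 (int q)) = int (idx (stk ! q))))"

lemma visit_ok:
  assumes W: "wrel lo hi k s (acc, mark, stk)" and cur: "fst s 10 = int (idx c)" and c: "c \<in> R" and d: "d \<in> R"
    and e: "aval e s = int (idx d)"
  shows "runs (VISIT e) s (\<lambda>t s'. wrel lo hi k s' (algo.vis x0 y0 k c d (acc, mark, stk)) \<and> fst s' 10 = int (idx c) \<and> t \<le> 8)"
proof -
  have B: "base s" "rc s" "fst s 0 = lo" "fst s 4 = hi" "fst s 5 = int k" "fst s 9 = int (length stk)"
    and A: "\<forall>c\<in>R. snd s (ad 0 (int (idx c))) = int (acc c) \<and> snd s (ad 1 (int (idx c))) = (if c \<in> mark then 1 else 0)"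
    and S: "\<forall>q<length stk. snd s (ad 2 (int q)) = int (idx (stk ! q))"
    using W unfolding wrel_def prod.case by blast+
  have accd: "snd s (ad 0 (int (idx d))) = int (acc d)" and markd: "snd s (ad 1 (int (idx d))) = (if d \<in> mark then 1 else 0)"
    using A d by blast+
  have yc: "snd s (2 + fst s 3 + int (idx c)) = int (y0 c)" using base_Y[OF B(1) c] .
  have yd: "snd s (2 + fst s 3 + int (idx d)) = int (y0 d)" using base_Y[OF B(1) d] .
  have xd: "snd s (2 + int (idx d)) = int (x0 d)" using base_X[OF B(1) d] .
  have n3: "fst s 3 = int h * int w" using B(1) by (simp add: base_def)
  have "0 \<le> int h * int w" by simp
  hence nadY: "\<And>j x. 0 \<le> x \<Longrightarrow> 2 + int h * int w + int (idx d) \<noteq> ad j x" "\<And>j x. 0 \<le> x \<Longrightarrow> 2 + int (idx d) \<noteq> ad j x"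
    "\<And>j x. 0 \<le> x \<Longrightarrow> 2 + int h * int w + int (idx c) \<noteq> ad j x"
    using ad_neg by (metis add_nonneg_nonneg le_less_trans not_le of_nat_0_le_iff zero_le_numeral)+
  let ?a = "acc(d := acc d + y0 c)"
  show ?thesis
  proof (cases "d \<notin> mark \<and> 0 < y0 d \<and> x0 d + k \<le> ?a d")
    case True
    have v: "algo.vis x0 y0 k c d (acc, mark, stk) = (?a, insert d mark, stk @ [d])"
      unfolding vis_def' Let_def prod.case using True by simp
    show ?thesis unfolding v VISIT_def PUSH_def
      using True B accd markd yc yd xd e cur nadY n3 A S idx_inj[OF _ d] d
      apply (simp add: wrel_def nth_append del: split_paired_All)
      done
  next
    case False
    have v: "algo.vis x0 y0 k c d (acc, mark, stk) = (?a, mark, stk)"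
      unfolding vis_def' Let_def prod.case using False by auto
    show ?thesis unfolding v VISIT_def PUSH_def
      using False B accd markd yc yd xd e cur nadY n3 A S idx_inj[OF _ d] d
      apply (simp add: wrel_def nth_append del: split_paired_All)
      apply auto
      done
  qed
qed


definition Wc :: "int \<Rightarrow> int \<Rightarrow> nat \<Rightarrow> cell \<Rightarrow> state \<Rightarrow> ast \<Rightarrow> bool" where
  "Wc lo hi k c s st \<longleftrightarrow> wrel lo hi k s st \<and> fst s 10 = int (idx c)"

definition frag :: "int \<Rightarrow> int \<Rightarrow> nat \<Rightarrow> cell \<Rightarrow> com \<Rightarrow> cell list \<Rightarrow> nat \<Rightarrow> bool" where
  "frag lo hi k c C xs K \<longleftrightarrow> (\<forall>s st. Wc lo hi k c s st \<longrightarrow>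
     runs C s (\<lambda>t s'. Wc lo hi k c s' (fold (algo.vis x0 y0 k c) xs st) \<and> t \<le> K))"

lemma frag_seq:
  assumes "frag lo hi k c C1 xs a" "frag lo hi k c C2 ys b"
  shows "frag lo hi k c (Seq C1 C2) (xs @ ys) (a + b)"
  unfolding frag_def
proof (intro allI impI)
  fix s st assume W: "Wc lo hi k c s st"
  show "runs (Seq C1 C2) s (\<lambda>t s'. Wc lo hi k c s' (fold (algo.vis x0 y0 k c) (xs @ ys) st) \<and> t \<le> a + b)"
    unfolding runs_Seq
  proof (rule runs_mono)
    show "runs C1 s (\<lambda>t s'. Wc lo hi k c s' (fold (algo.vis x0 y0 k c) xs st) \<and> t \<le> a)"
      using assms(1) W unfolding frag_def by blast
  next
    fix t1 s1 assume 1: "Wc lo hi k c s1 (fold (algo.vis x0 y0 k c) xs st) \<and> t1 \<le> a"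
    show "runs C2 s1 (\<lambda>t2 s2. Wc lo hi k c s2 (fold (algo.vis x0 y0 k c) (xs @ ys) st) \<and> t1 + t2 \<le> a + b)"
    proof -
      have "runs C2 s1 (\<lambda>t s'. Wc lo hi k c s' (fold (algo.vis x0 y0 k c) ys (fold (algo.vis x0 y0 k c) xs st)) \<and> t \<le> b)"
        using assms(2) 1 unfolding frag_def by blast
      thus ?thesis by (rule runs_mono) (use 1 in auto)
    qed
  qed
qed

lemma Wc_vals:
  assumes "Wc lo hi k c s st" "c \<in> R"
  shows "aval COLc s = int (snd c)" "aval ROWc s = int (fst c)" "fst s 1 = int h" "fst s 2 = int w"
    "fst s 10 = int (idx c)"
proof -
  obtain acc mark stk where st: "st = (acc, mark, stk)" by (cases st)
  have "base s" "rc s" "fst s 10 = int (idx c)" using assms(1) unfolding Wc_def wrel_def st prod.case by blast+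
  thus "aval COLc s = int (snd c)" "aval ROWc s = int (fst c)" "fst s 1 = int h" "fst s 2 = int w"
    "fst s 10 = int (idx c)"
    using rc_row[of s c] rc_col[of s c] assms(2) by (auto simp: COLc_def ROWc_def base_def)
qed

lemma frag_G1:
  assumes c: "c \<in> R"
    and cond: "\<And>s st. Wc lo hi k c s st \<Longrightarrow> bval b s \<longleftrightarrow> P"
    and tgt: "P \<Longrightarrow> d \<in> R \<and> (\<forall>s st. Wc lo hi k c s st \<longrightarrow> aval e s = int (idx d))"
  shows "frag lo hi k c (G1 b e) (if P then [d] else []) 9"
  unfolding frag_def
proof (intro allI impI)
  fix s st assume W: "Wc lo hi k c s st"
  obtain acc mark stk where st: "st = (acc, mark, stk)" by (cases st)
  show "runs (G1 b e) s (\<lambda>t s'. Wc lo hi k c s' (fold (algo.vis x0 y0 k c) (if P then [d] else []) st) \<and> t \<le> 9)"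
  proof (cases P)
    case True
    have "runs (VISIT e) s (\<lambda>t s'. wrel lo hi k s' (algo.vis x0 y0 k c d (acc, mark, stk)) \<and> fst s' 10 = int (idx c) \<and> t \<le> 8)"
    proof -
      have "aval e s = int (idx d)" "d \<in> R" using W tgt[OF True] by blast+
      thus ?thesis using W c unfolding Wc_def st by (intro visit_ok) auto
    qed
    thus ?thesis using True cond[OF W] unfolding G1_def st Wc_def by (auto elim!: runs_mono)
  next
    case False
    thus ?thesis using W cond[OF W] unfolding G1_def by simp
  qed
qed

lemma frag_G2:
  assumes c: "c \<in> R"
    and cond1: "\<And>s st. Wc lo hi k c s st \<Longrightarrow> bval b1 s \<longleftrightarrow> P1"
    and cond2: "\<And>s st. Wc lo hi k c s st \<Longrightarrow> bval b2 s \<longleftrightarrow> P2"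
    and tgt: "P1 \<and> P2 \<Longrightarrow> d \<in> R \<and> (\<forall>s st. Wc lo hi k c s st \<longrightarrow> aval e s = int (idx d))"
  shows "frag lo hi k c (G2 b1 b2 e) (if P1 \<and> P2 then [d] else []) 10"
  unfolding frag_def
proof (intro allI impI)
  fix s st assume W: "Wc lo hi k c s st"
  obtain acc mark stk where st: "st = (acc, mark, stk)" by (cases st)
  show "runs (G2 b1 b2 e) s (\<lambda>t s'. Wc lo hi k c s' (fold (algo.vis x0 y0 k c) (if P1 \<and> P2 then [d] else []) st) \<and> t \<le> 10)"
  proof (cases "P1 \<and> P2")
    case True
    have "runs (VISIT e) s (\<lambda>t s'. wrel lo hi k s' (algo.vis x0 y0 k c d (acc, mark, stk)) \<and> fst s' 10 = int (idx c) \<and> t \<le> 8)"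
    proof -
      have "aval e s = int (idx d)" "d \<in> R" using W tgt[OF True] by blast+
      thus ?thesis using W c unfolding Wc_def st by (intro visit_ok) auto
    qed
    thus ?thesis using True cond1[OF W] cond2[OF W] unfolding G2_def st Wc_def by (auto elim!: runs_mono)
  next
    case False
    thus ?thesis using W cond1[OF W] cond2[OF W] unfolding G2_def by auto
  qed
qed


lemma Wc_valsD:
  assumes "Wc lo hi k c s st" "c \<in> R"
  shows "aval COLc s = int (snd c) \<and> aval ROWc s = int (fst c) \<and> fst s 1 = int h \<and> fst s 2 = int w \<and>
    fst s 10 = int (idx c)"
  using Wc_vals[OF assms] by blast

lemma frag_If:
  assumes "frag lo hi k c C1 xs K" "frag lo hi k c C2 ys K"
    and cond: "\<And>s st. Wc lo hi k c s st \<Longrightarrow> bval b s \<longleftrightarrow> P"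
  shows "frag lo hi k c (If b C1 C2) (if P then xs else ys) (K + 1)"
  unfolding frag_def
proof (intro allI impI)
  fix s st assume W: "Wc lo hi k c s st"
  show "runs (If b C1 C2) s (\<lambda>t s'. Wc lo hi k c s' (fold (algo.vis x0 y0 k c) (if P then xs else ys) st) \<and> t \<le> K + 1)"
  proof (cases P)
    case True
    have "runs C1 s (\<lambda>t s'. Wc lo hi k c s' (fold (algo.vis x0 y0 k c) xs st) \<and> t \<le> K)"
      using assms(1) W unfolding frag_def by blast
    thus ?thesis using True cond[OF W] by (auto elim!: runs_mono)
  next
    case False
    have "runs C2 s (\<lambda>t s'. Wc lo hi k c s' (fold (algo.vis x0 y0 k c) ys st) \<and> t \<le> K)"
      using assms(2) W unfolding frag_def by blast
    thus ?thesis using False cond[OF W] by (auto elim!: runs_mono)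
  qed
qed

lemma im1: "0 < i \<Longrightarrow> int (idx (i - 1, j)) = int (idx (i, j)) - int w"
  by (cases i) (auto simp: algebra_simps idx_def)
lemma jm1: "0 < j \<Longrightarrow> int (idx (i, j - 1)) = int (idx (i, j)) - 1"
  by (cases j) (auto simp: algebra_simps idx_def)
lemma ijm1: "0 < i \<Longrightarrow> 0 < j \<Longrightarrow> int (idx (i - 1, j - 1)) = int (idx (i, j)) - int w - 1"
  by (cases i; cases j) (auto simp: algebra_simps idx_def)
lemma im1jp: "0 < i \<Longrightarrow> int (idx (i - 1, Suc j)) = int (idx (i, j)) - int w + 1"
  by (cases i) (auto simp: algebra_simps idx_def)
lemma ipjm: "0 < j \<Longrightarrow> int (idx (Suc i, j - 1)) = int (idx (i, j)) + int w - 1"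
  by (cases j) (auto simp: algebra_simps idx_def)
lemma ip: "int (idx (Suc i, j)) = int (idx (i, j)) + int w" by (simp add: idx_def algebra_simps)
lemma jp: "int (idx (i, Suc j)) = int (idx (i, j)) + 1" by (simp add: idx_def algebra_simps)
lemma ipjp: "int (idx (Suc i, Suc j)) = int (idx (i, j)) + int w + 1" by (simp add: idx_def algebra_simps)

lemma odd_int: "(int i - (int i div 2 + int i div 2) = 1) \<longleftrightarrow> odd i"
  by presburger

lemma frag_NB:
  assumes c: "c \<in> R"
  shows "frag lo hi k c NB (nbl h w c) 57"
proof -
  obtain i j where ij: "c = (i,j)" by (cases c)
  have r: "i < h" "j < w" using c ij by (auto simp: in_region_def)
  note V = Wc_vals[OF _ c]
  have F1: "frag lo hi k c (G1 (Less (Add COLc (Num 1)) (Reg 2)) (Add (Reg 10) (Num 1))) (if j + 1 < w then [(i, j+1)] else []) 9"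
    apply (rule frag_G1[OF c])
    subgoal for s st using Wc_valsD[OF _ c, of lo hi k s st] r by (simp add: ij idx_def; arith)
        subgoal using r apply (intro conjI allI impI)
      apply (force simp: ij in_region_def)
      apply (drule Wc_valsD[OF _ c])
      apply (simp add: ij im1 jm1 ijm1 im1jp ipjm ip jp ipjp)
      done
    done
  have F2: "frag lo hi k c (G1 (Less (Num 0) COLc) (Sub (Reg 10) (Num 1))) (if 0 < j then [(i, j-1)] else []) 9"
    apply (rule frag_G1[OF c])
    subgoal for s st using Wc_valsD[OF _ c, of lo hi k s st] r by (simp add: ij idx_def; arith)
        subgoal using r jm1 apply (intro conjI allI impI)
      apply (force simp: ij in_region_def)
      apply (drule Wc_valsD[OF _ c])
      apply (simp add: ij im1 jm1 ijm1 im1jp ipjm ip jp ipjp)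
      done
    done
  have F3: "frag lo hi k c (G1 (Less (Add ROWc (Num 1)) (Reg 1)) (Add (Reg 10) (Reg 2))) (if i + 1 < h then [(i+1, j)] else []) 9"
    apply (rule frag_G1[OF c])
    subgoal for s st using Wc_valsD[OF _ c, of lo hi k s st] r by (simp add: ij idx_def; arith)
        subgoal using r apply (intro conjI allI impI)
      apply (force simp: ij in_region_def)
      apply (drule Wc_valsD[OF _ c])
      apply (simp add: ij im1 jm1 ijm1 im1jp ipjm ip jp ipjp)
      done
    done
  have F4: "frag lo hi k c (G1 (Less (Num 0) ROWc) (Sub (Reg 10) (Reg 2))) (if 0 < i then [(i-1, j)] else []) 9"
    apply (rule frag_G1[OF c])
    subgoal for s st using Wc_valsD[OF _ c, of lo hi k s st] r by (simp add: ij idx_def; arith)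
        subgoal using r im1 apply (intro conjI allI impI)
      apply (force simp: ij in_region_def)
      apply (drule Wc_valsD[OF _ c])
      apply (simp add: ij im1 jm1 ijm1 im1jp ipjm ip jp ipjp)
      done
    done
  have F5: "frag lo hi k c (G2 (Less (Add COLc (Num 1)) (Reg 2)) (Less (Add ROWc (Num 1)) (Reg 1)) (Add (Add (Reg 10) (Reg 2)) (Num 1)))
      (if j + 1 < w \<and> i + 1 < h then [(i+1, j+1)] else []) 10"
    apply (rule frag_G2[OF c])
    subgoal for s st using Wc_valsD[OF _ c, of lo hi k s st] r by (simp add: ij idx_def; arith)
    subgoal for s st using Wc_valsD[OF _ c, of lo hi k s st] r by (simp add: ij idx_def; arith)
        subgoal using r apply (intro conjI allI impI)
      apply (force simp: ij in_region_def)
      apply (drule Wc_valsD[OF _ c])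
      apply (simp add: ij im1 jm1 ijm1 im1jp ipjm ip jp ipjp)
      done
    done
  have F6: "frag lo hi k c (G2 (Less (Add COLc (Num 1)) (Reg 2)) (Less (Num 0) ROWc) (Add (Sub (Reg 10) (Reg 2)) (Num 1)))
      (if j + 1 < w \<and> 0 < i then [(i-1, j+1)] else []) 10"
    apply (rule frag_G2[OF c])
    subgoal for s st using Wc_valsD[OF _ c, of lo hi k s st] r by (simp add: ij idx_def; arith)
    subgoal for s st using Wc_valsD[OF _ c, of lo hi k s st] r by (simp add: ij idx_def; arith)
        subgoal using r im1jp apply (intro conjI allI impI)
      apply (force simp: ij in_region_def)
      apply (drule Wc_valsD[OF _ c])
      apply (simp add: ij im1 jm1 ijm1 im1jp ipjm ip jp ipjp)
      done
    done
  have F7: "frag lo hi k c (G2 (Less (Num 0) COLc) (Less (Add ROWc (Num 1)) (Reg 1)) (Sub (Add (Reg 10) (Reg 2)) (Num 1)))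
      (if 0 < j \<and> i + 1 < h then [(i+1, j-1)] else []) 10"
    apply (rule frag_G2[OF c])
    subgoal for s st using Wc_valsD[OF _ c, of lo hi k s st] r by (simp add: ij idx_def; arith)
    subgoal for s st using Wc_valsD[OF _ c, of lo hi k s st] r by (simp add: ij idx_def; arith)
        subgoal using r ipjm apply (intro conjI allI impI)
      apply (force simp: ij in_region_def)
      apply (drule Wc_valsD[OF _ c])
      apply (simp add: ij im1 jm1 ijm1 im1jp ipjm ip jp ipjp)
      done
    done
  have F8: "frag lo hi k c (G2 (Less (Num 0) COLc) (Less (Num 0) ROWc) (Sub (Sub (Reg 10) (Reg 2)) (Num 1)))
      (if 0 < j \<and> 0 < i then [(i-1, j-1)] else []) 10"
    apply (rule frag_G2[OF c])
    subgoal for s st using Wc_valsD[OF _ c, of lo hi k s st] r by (simp add: ij idx_def; arith)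
    subgoal for s st using Wc_valsD[OF _ c, of lo hi k s st] r by (simp add: ij idx_def; arith)
        subgoal using r ijm1 apply (intro conjI allI impI)
      apply (force simp: ij in_region_def)
      apply (drule Wc_valsD[OF _ c])
      apply (simp add: ij im1 jm1 ijm1 im1jp ipjm ip jp ipjp)
      done
    done
  have FI: "frag lo hi k c (If (Eq (Sub ROWc (Add (Half ROWc) (Half ROWc))) (Num 1))
          (Seq (G2 (Less (Add COLc (Num 1)) (Reg 2)) (Less (Add ROWc (Num 1)) (Reg 1)) (Add (Add (Reg 10) (Reg 2)) (Num 1)))
               (G2 (Less (Add COLc (Num 1)) (Reg 2)) (Less (Num 0) ROWc) (Add (Sub (Reg 10) (Reg 2)) (Num 1))))
          (Seq (G2 (Less (Num 0) COLc) (Less (Add ROWc (Num 1)) (Reg 1)) (Sub (Add (Reg 10) (Reg 2)) (Num 1)))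
               (G2 (Less (Num 0) COLc) (Less (Num 0) ROWc) (Sub (Sub (Reg 10) (Reg 2)) (Num 1)))))
       (if odd i then (if j + 1 < w \<and> i + 1 < h then [(i+1, j+1)] else []) @ (if j + 1 < w \<and> 0 < i then [(i-1, j+1)] else [])
        else (if 0 < j \<and> i + 1 < h then [(i+1, j-1)] else []) @ (if 0 < j \<and> 0 < i then [(i-1, j-1)] else [])) (10 + 10 + 1)"
    apply (rule frag_If[OF frag_seq[OF F5 F6] frag_seq[OF F7 F8]])
    subgoal for s st using Wc_valsD[OF _ c, of lo hi k s st] odd_int[of i] by (simp add: ij)
    done
  note X = frag_seq[OF F1 frag_seq[OF F2 frag_seq[OF F3 frag_seq[OF F4 FI]]]]
  show ?thesis using X unfolding NB_def ij by simp
qed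


lemma card_R: "card R = n"
proof -
  have "R = {..<h} \<times> {..<w}" by (auto simp: in_region_def)
  thus ?thesis by (simp add: card_cartesian_product)
qed

definition Pw :: "state \<Rightarrow> nat" where
  "Pw s = 60 * (nat (fst s 9) + card {c \<in> R. snd s (ad 1 (int (idx c))) = 0})"

lemma Pw_eq:
  assumes "wrel lo hi k s (acc, mark, stk)" "mark \<subseteq> R"
  shows "Pw s = 60 * algo.pot h w (acc, mark, stk)"
proof -
  have A: "\<forall>c\<in>R. snd s (ad 1 (int (idx c))) = (if c \<in> mark then 1 else 0)" and l: "fst s 9 = int (length stk)"
    using assms(1) unfolding wrel_def prod.case by blast+
  have "{c \<in> R. snd s (ad 1 (int (idx c))) = 0} = R - mark" using A by auto
  thus ?thesis unfolding Pw_def algo.pot_def[OF algo_w] prod.case using l by simp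
qed

lemma pot_le_n:
  assumes "algo.Inv h w x0 y0 k (acc, mark, stk)"
  shows "algo.pot h w (acc, mark, stk) \<le> n"
proof -
  have I: "mark \<subseteq> R" "set stk \<subseteq> mark" "distinct stk"
    using assms unfolding algo.Inv_def[OF algo_w] prod.case by blast+
  have fin: "finite R" using finite_region by simp
  have "length stk = card (set stk)" using I(3) by (simp add: distinct_card)
  also have "\<dots> \<le> card mark" using I(1,2) fin by (intro card_mono) (auto intro: finite_subset)
  finally have "length stk + card (R - mark) \<le> card mark + card (R - mark)" by simp
  also have "\<dots> = card R" using I(1) fin by (metis card_Diff_subset finite_subset le_add_diff_inverse card_mono)
  finally show ?thesis unfolding algo.pot_def[OF algo_w] prod.case card_R .
qed

lemma wl_body:
  assumes W: "wrel lo hi k s st" and I: "algo.Inv h w x0 y0 k st" and b: "bval (Less (Num 0) (Reg 9)) s"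
  shows "runs WLBODY s (\<lambda>t s'. (\<exists>st'. wrel lo hi k s' st' \<and> algo.Inv h w x0 y0 k st') \<and> t + 1 + Pw s' \<le> Pw s)"
proof -
  obtain acc mark stk where st: "st = (acc, mark, stk)" by (cases st)
  have B: "base s" "rc s" "fst s 0 = lo" "fst s 4 = hi" "fst s 5 = int k" "fst s 9 = int (length stk)"
    and A: "\<forall>c\<in>R. snd s (ad 0 (int (idx c))) = int (acc c) \<and> snd s (ad 1 (int (idx c))) = (if c \<in> mark then 1 else 0)"
    and S: "\<forall>q<length stk. snd s (ad 2 (int q)) = int (idx (stk ! q))"
    using W unfolding wrel_def st prod.case by blast+
  have ne: "stk \<noteq> []" using b B(6) by auto
  let ?c = "last stk"
  have IR: "mark \<subseteq> R" "set stk \<subseteq> mark" using I unfolding st algo.Inv_def[OF algo_w] prod.case by blast+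
  have cR: "?c \<in> R" using IR ne last_in_set[OF ne] by blast
  have lst: "stk ! (length stk - 1) = ?c" using ne by (simp add: last_conv_nth)
  have lm: "int (length stk - Suc 0) = int (length stk) - 1" using ne by (cases stk) auto
  have top: "snd s (ad 2 (int (length stk) - 1)) = int (idx ?c)"
    using S ne lst lm by (metis One_nat_def diff_less length_greater_0_conv zero_less_one)
  define s1 where "s1 = ((fst s)(9 := int (length stk) - 1, 10 := int (idx ?c)), snd s)"
  have W1: "Wc lo hi k ?c s1 (acc, mark, butlast stk)"
    unfolding Wc_def wrel_def prod.case s1_def using B A S ne
    by (simp add: nth_butlast lm)
  have NBr: "runs NB s1 (\<lambda>t s'. Wc lo hi k ?c s' (fold (algo.vis x0 y0 k ?c) (nbl h w ?c) (acc, mark, butlast stk)) \<and> t \<le> 57)"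
    using frag_NB[OF cR, of lo hi k] W1 unfolding frag_def by blast
  have stp: "fold (algo.vis x0 y0 k ?c) (nbl h w ?c) (acc, mark, butlast stk) = algo.step h w x0 y0 k st"
    unfolding algo.step_def[OF algo_w] st by simp
  have IS: "algo.Inv h w x0 y0 k (algo.step h w x0 y0 k st)" using algo.step_Inv[OF algo_w I] ne st by simp
  have PS: "algo.pot h w (algo.step h w x0 y0 k st) + 1 = algo.pot h w st" using algo.step_pot[OF algo_w I] ne st by simp
  have P0: "Pw s = 60 * algo.pot h w st" using Pw_eq[OF W[unfolded st] IR(1)] st by simp
  have "runs NB s1 (\<lambda>t s'. (\<exists>st'. wrel lo hi k s' st' \<and> algo.Inv h w x0 y0 k st') \<and> Suc (Suc t) + 1 + Pw s' \<le> Pw s)"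
  proof (rule runs_mono[OF NBr])
    fix t :: nat and s' assume a: "Wc lo hi k ?c s' (fold (algo.vis x0 y0 k ?c) (nbl h w ?c) (acc, mark, butlast stk)) \<and> t \<le> 57"
    hence Ws: "wrel lo hi k s' (algo.step h w x0 y0 k st)" using stp by (simp add: Wc_def)
    obtain a1 m1 s1' where e: "algo.step h w x0 y0 k st = (a1, m1, s1')" by (cases "algo.step h w x0 y0 k st")
    have "m1 \<subseteq> R" using IS e unfolding algo.Inv_def[OF algo_w] by simp
    hence "Pw s' = 60 * algo.pot h w (algo.step h w x0 y0 k st)" using Pw_eq[of lo hi k s' a1 m1 s1'] Ws e by simp
    moreover have "\<exists>st'. wrel lo hi k s' st' \<and> algo.Inv h w x0 y0 k st'" using Ws IS by blast
    ultimately show "(\<exists>st'. wrel lo hi k s' st' \<and> algo.Inv h w x0 y0 k st') \<and> Suc (Suc t) + 1 + Pw s' \<le> Pw s"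
      using PS P0 a by simp
  qed
  thus ?thesis unfolding WLBODY_def using B(6) top by (simp add: s1_def)
qed


lemma wl_ok:
  assumes W: "wrel lo hi k s st" and I: "algo.Inv h w x0 y0 k st"
  shows "runs WL s (\<lambda>t s'. (\<exists>acc. wrel lo hi k s' (acc, lfp (Phi h w (thk w x0 k) y0), [])) \<and> t \<le> 60 * n + 1)"
proof -
  have r: "runs WL s (\<lambda>t s'. (\<exists>st. wrel lo hi k s' st \<and> algo.Inv h w x0 y0 k st) \<and> \<not> bval (Less (Num 0) (Reg 9)) s' \<and> t \<le> Pw s + 1)"
    unfolding WL_def
  proof (rule runs_While)
    show "\<exists>st. wrel lo hi k s st \<and> algo.Inv h w x0 y0 k st" using W I by blast
  next
    fix s assume "\<exists>st. wrel lo hi k s st \<and> algo.Inv h w x0 y0 k st" "bval (Less (Num 0) (Reg 9)) s"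
    thus "runs WLBODY s (\<lambda>t s'. (\<exists>st. wrel lo hi k s' st \<and> algo.Inv h w x0 y0 k st) \<and> t + 1 + Pw s' \<le> Pw s)"
      using wl_body by blast
  qed
  obtain acc mark stk where st: "st = (acc, mark, stk)" by (cases st)
  have "mark \<subseteq> R" using I st unfolding algo.Inv_def[OF algo_w] by simp
  hence "Pw s = 60 * algo.pot h w st" using Pw_eq W st by simp
  also have "\<dots> \<le> 60 * n" using pot_le_n I st by simp
  finally have Pn: "Pw s \<le> 60 * n" .
  show ?thesis
  proof (rule runs_mono[OF r])
    fix t :: nat and s' assume a: "(\<exists>st. wrel lo hi k s' st \<and> algo.Inv h w x0 y0 k st) \<and> \<not> bval (Less (Num 0) (Reg 9)) s' \<and> t \<le> Pw s + 1"
    then obtain st' where W': "wrel lo hi k s' st'" and I': "algo.Inv h w x0 y0 k st'" by blast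
    obtain a' m' s'' where st': "st' = (a', m', s'')" by (cases st')
    have "fst s' 9 = int (length s'')" using W' st' unfolding wrel_def by simp
    hence "s'' = []" using a by simp
    hence "m' = lfp (Phi h w (thk w x0 k) y0)" using algo.Inv_final[OF algo_w] I' st' by blast
    hence "wrel lo hi k s' (a', lfp (Phi h w (thk w x0 k) y0), [])" using W' st' \<open>s'' = []\<close> by simp
    thus "(\<exists>acc. wrel lo hi k s' (acc, lfp (Phi h w (thk w x0 k) y0), [])) \<and> t \<le> 60 * n + 1"
      using a Pn by auto
  qed
qed


abbreviation "S0k k \<equiv> algo.S0 h w x0 y0 k"

definition sl :: "nat \<Rightarrow> nat \<Rightarrow> cell list" where
  "sl k m = filter (\<lambda>c. c \<in> S0k k) (map cel [0..<m])"

definition RI :: "int \<Rightarrow> int \<Rightarrow> nat \<Rightarrow> nat \<Rightarrow> state \<Rightarrow> bool" where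
  "RI lo hi k m s \<longleftrightarrow> base s \<and> rc s \<and> fst s 0 = lo \<and> fst s 4 = hi \<and> fst s 5 = int k \<and> m \<le> n \<and> fst s 6 = int m \<and>
     (\<forall>m'<m. snd s (ad 0 (int m')) = 0 \<and> snd s (ad 1 (int m')) = (if cel m' \<in> S0k k then 1 else 0)) \<and>
     fst s 9 = int (length (sl k m)) \<and> (\<forall>q<length (sl k m). snd s (ad 2 (int q)) = int (idx (sl k m ! q)))"

lemma S0_iff: "c \<in> R \<Longrightarrow> c \<in> S0k k \<longleftrightarrow> 0 < y0 c \<and> (snd c = w - 1 \<or> x0 c + k = 0)"
  unfolding algo.S0_def[OF algo_w] thk_def by auto

lemma rbody:
  assumes RI: "RI lo hi k m s" and b: "m < n"
  shows "runs RBODY s (\<lambda>t s'. RI lo hi k (Suc m) s' \<and> t \<le> 11)"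
proof -
  have B: "base s" "rc s" "fst s 0 = lo" "fst s 4 = hi" "fst s 5 = int k" "fst s 6 = int m"
    and A: "\<forall>m'<m. snd s (ad 0 (int m')) = 0 \<and> snd s (ad 1 (int m')) = (if cel m' \<in> S0k k then 1 else 0)"
    and sp: "fst s 9 = int (length (sl k m))"
    and S: "\<forall>q<length (sl k m). snd s (ad 2 (int q)) = int (idx (sl k m ! q))"
    using RI unfolding RI_def by blast+
  let ?c = "cel m"
  have cR: "?c \<in> R" using cel_R[OF b] .
  have yc: "snd s (2 + fst s 3 + int m) = int (y0 ?c)" using base_Y[OF B(1) cR] by simp
  have xc: "snd s (2 + int m) = int (x0 ?c)" using base_X[OF B(1) cR] by simp
  have colc: "snd s (ad 4 (int m)) = int (snd ?c)" using rc_col[OF B(2) cR] by simp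
  have n3: "fst s 3 = int h * int w" "fst s 2 = int w" using B(1) by (simp_all add: base_def)
  have "0 \<le> int h * int w" by simp
  hence nad: "\<And>j x. 0 \<le> x \<Longrightarrow> 2 + int h * int w + int m \<noteq> ad j x" "\<And>j x. 0 \<le> x \<Longrightarrow> 2 + int m \<noteq> ad j x"
    using ad_neg by (metis add_nonneg_nonneg le_less_trans not_le of_nat_0_le_iff zero_le_numeral)+
  have slS: "sl k (Suc m) = sl k m @ (if ?c \<in> S0k k then [?c] else [])" by (simp add: sl_def)
  have wc: "int (snd ?c) = int w - 1 \<longleftrightarrow> snd ?c = w - 1" using w2 by auto
  show ?thesis
  proof (cases "?c \<in> S0k k")
    case True
    show ?thesis unfolding RBODY_def SEED_def RI_def
      using True S0_iff[OF cR, of k] B A sp S yc xc colc n3 nad slS wc b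
      apply (simp add: nth_append less_Suc_eq del: split_paired_All)
      apply auto
      done
  next
    case False
    show ?thesis unfolding RBODY_def SEED_def RI_def
      using False S0_iff[OF cR, of k] B A sp S yc xc colc n3 nad slS wc b
      apply (simp add: nth_append less_Suc_eq del: split_paired_All)
      done
  qed
qed


lemma sl_props: "set (sl k n) = S0k k" "distinct (sl k n)"
proof -
  have "S0k k \<subseteq> R" unfolding algo.S0_def[OF algo_w] by auto
  moreover have "set (map cel [0..<n]) = R"
  proof
    show "set (map cel [0..<n]) \<subseteq> R" using cel_R by auto
    show "R \<subseteq> set (map cel [0..<n])"
    proof
      fix c assume "c \<in> R"
      hence "c = cel (idx c)" "idx c < n" using idx_lt by auto
      thus "c \<in> set (map cel [0..<n])" by (metis atLeastLessThan_iff image_eqI le0 set_map set_upt)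
    qed
  qed
  ultimately show "set (sl k n) = S0k k" unfolding sl_def by auto
  have "inj_on cel {0..<n}" by (metis idx_cel inj_onI)
  hence "distinct (map cel [0..<n])" by (simp add: distinct_map)
  thus "distinct (sl k n)" unfolding sl_def by simp
qed

lemma reset_ok:
  assumes "base s" "rc s" "fst s 0 = lo" "fst s 4 = hi" "fst s 5 = int k"
  shows "runs RESET s (\<lambda>t s'. wrel lo hi k s' ((\<lambda>_. 0), S0k k, sl k n) \<and>
      algo.Inv h w x0 y0 k ((\<lambda>_. 0), S0k k, sl k n) \<and> t \<le> 12 * n + 3)"
proof -
  let ?P = "\<lambda>s. 12 * (n - nat (fst s 6))"
  define s0 where "s0 = ((fst s)(6 := 0, 9 := 0), snd s)"
  have RI0: "RI lo hi k 0 s0" using assms unfolding RI_def s0_def by (simp add: sl_def)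
  have r: "runs (While (Less (Reg 6) (Reg 3)) RBODY) s0 (\<lambda>t s'. (\<exists>m. RI lo hi k m s') \<and> \<not> bval (Less (Reg 6) (Reg 3)) s' \<and> t \<le> ?P s0 + 1)"
  proof (rule runs_While)
    show "\<exists>m. RI lo hi k m s0" using RI0 by blast
  next
    fix s assume a: "\<exists>m. RI lo hi k m s" "bval (Less (Reg 6) (Reg 3)) s"
    then obtain m where m: "RI lo hi k m s" by blast
    have "fst s 6 = int m" "fst s 3 = int n" using m unfolding RI_def base_def by (auto simp del: of_nat_mult)
    hence mn: "m < n" using a(2) by (simp del: of_nat_mult)
    show "runs RBODY s (\<lambda>t s'. (\<exists>m. RI lo hi k m s') \<and> t + 1 + ?P s' \<le> ?P s)"
    proof (rule runs_mono[OF rbody[OF m mn]])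
      fix t :: nat and s' assume b: "RI lo hi k (Suc m) s' \<and> t \<le> 11"
      hence "fst s' 6 = int (Suc m)" unfolding RI_def by blast
      thus "(\<exists>m. RI lo hi k m s') \<and> t + 1 + ?P s' \<le> ?P s" using b \<open>fst s 6 = int m\<close> mn by auto
    qed
  qed
  have P0: "?P s0 = 12 * n" by (simp add: s0_def)
  show ?thesis unfolding RESET_def runs_Seq runs_Assign
  proof (simp only: prod.collapse fst_conv snd_conv aval.simps s0_def[symmetric], rule runs_mono[OF r])
    fix t :: nat and s' assume a: "(\<exists>m. RI lo hi k m s') \<and> \<not> bval (Less (Reg 6) (Reg 3)) s' \<and> t \<le> ?P s0 + 1"
    then obtain m where m: "RI lo hi k m s'" by blast
    have "fst s' 6 = int m" "fst s' 3 = int n" "m \<le> n" using m unfolding RI_def base_def by (auto simp del: of_nat_mult)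
    hence mn: "m = n" using a by (simp del: of_nat_mult)
    have W: "wrel lo hi k s' ((\<lambda>_. 0), S0k k, sl k n)"
      unfolding wrel_def prod.case using m mn idx_lt unfolding RI_def by auto
    show "wrel lo hi k s' ((\<lambda>_. 0), S0k k, sl k n) \<and> algo.Inv h w x0 y0 k ((\<lambda>_. 0), S0k k, sl k n) \<and> 1 + (1 + t) \<le> 12 * n + 3"
      using W algo.Inv_init[OF algo_w sl_props] a P0 by simp
  qed
qed


abbreviation "Lk k \<equiv> lfp (Phi h w (thk w x0 k) y0)"

definition bad :: "nat \<Rightarrow> cell \<Rightarrow> bool" where
  "bad k c \<longleftrightarrow> snd c = 0 \<and> 0 < x0 c \<and> 0 < y0 c \<and> c \<in> Lk k"

definition CI :: "int \<Rightarrow> int \<Rightarrow> nat \<Rightarrow> nat \<Rightarrow> state \<Rightarrow> bool" where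
  "CI lo hi k m s \<longleftrightarrow> base s \<and> rc s \<and> fst s 0 = lo \<and> fst s 4 = hi \<and> fst s 5 = int k \<and> m \<le> n \<and> fst s 6 = int m \<and>
     (\<forall>c\<in>R. snd s (ad 1 (int (idx c))) = (if c \<in> Lk k then 1 else 0)) \<and>
     fst s 11 = (if (\<forall>m'<m. \<not> bad k (cel m')) then 1 else 0)"

lemma cbody:
  assumes CI: "CI lo hi k m s" and b: "m < n"
  shows "runs CBODY s (\<lambda>t s'. CI lo hi k (Suc m) s' \<and> t \<le> 6)"
proof -
  have B: "base s" "rc s" "fst s 0 = lo" "fst s 4 = hi" "fst s 5 = int k" "fst s 6 = int m"
    and M: "\<forall>c\<in>R. snd s (ad 1 (int (idx c))) = (if c \<in> Lk k then 1 else 0)"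
    and g: "fst s 11 = (if (\<forall>m'<m. \<not> bad k (cel m')) then 1 else 0)"
    using CI unfolding CI_def by blast+
  let ?c = "cel m"
  have cR: "?c \<in> R" using cel_R[OF b] .
  have yc: "snd s (2 + fst s 3 + int m) = int (y0 ?c)" using base_Y[OF B(1) cR] by simp
  have xc: "snd s (2 + int m) = int (x0 ?c)" using base_X[OF B(1) cR] by simp
  have colc: "snd s (ad 4 (int m)) = int (snd ?c)" using rc_col[OF B(2) cR] by simp
  have mc: "snd s (ad 1 (int m)) = (if ?c \<in> Lk k then 1 else 0)" using M cR by (metis idx_cel)
  have n3: "fst s 3 = int h * int w" using B(1) by (simp add: base_def)
  have all: "(\<forall>m'<Suc m. \<not> bad k (cel m')) \<longleftrightarrow> (\<forall>m'<m. \<not> bad k (cel m')) \<and> \<not> bad k ?c"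
    using less_Suc_eq by auto
  show ?thesis unfolding CBODY_def CI_def
    using B M g yc xc colc mc n3 all b by (auto simp: bad_def)
qed

lemma check_ok:
  assumes "wrel lo hi k s (acc, Lk k, [])"
  shows "runs CHECK s (\<lambda>t s'. base s' \<and> rc s' \<and> fst s' 0 = lo \<and> fst s' 4 = hi \<and> fst s' 5 = int k \<and>
     fst s' 11 = (if Good h w x0 y0 k then 1 else 0) \<and> t \<le> 7 * n + 3)"
proof -
  let ?P = "\<lambda>s. 7 * (n - nat (fst s 6))"
  define s0 where "s0 = ((fst s)(11 := 1, 6 := 0), snd s)"
  have CI0: "CI lo hi k 0 s0" using assms unfolding CI_def s0_def wrel_def by auto
  have r: "runs (While (Less (Reg 6) (Reg 3)) CBODY) s0 (\<lambda>t s'. (\<exists>m. CI lo hi k m s') \<and> \<not> bval (Less (Reg 6) (Reg 3)) s' \<and> t \<le> ?P s0 + 1)"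
  proof (rule runs_While)
    show "\<exists>m. CI lo hi k m s0" using CI0 by blast
  next
    fix s assume a: "\<exists>m. CI lo hi k m s" "bval (Less (Reg 6) (Reg 3)) s"
    then obtain m where m: "CI lo hi k m s" by blast
    have "fst s 6 = int m" "fst s 3 = int n" using m unfolding CI_def base_def by (auto simp del: of_nat_mult)
    hence mn: "m < n" using a(2) by (simp del: of_nat_mult)
    show "runs CBODY s (\<lambda>t s'. (\<exists>m. CI lo hi k m s') \<and> t + 1 + ?P s' \<le> ?P s)"
    proof (rule runs_mono[OF cbody[OF m mn]])
      fix t :: nat and s' assume b: "CI lo hi k (Suc m) s' \<and> t \<le> 6"
      hence "fst s' 6 = int (Suc m)" unfolding CI_def by blast
      thus "(\<exists>m. CI lo hi k m s') \<and> t + 1 + ?P s' \<le> ?P s" using b \<open>fst s 6 = int m\<close> mn by auto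
    qed
  qed
  have P0: "?P s0 = 7 * n" by (simp add: s0_def)
  show ?thesis unfolding CHECK_def runs_Seq runs_Assign
  proof (simp only: prod.collapse fst_conv snd_conv aval.simps fun_upd_upd s0_def[symmetric], rule runs_mono[OF r])
    fix t :: nat and s' assume a: "(\<exists>m. CI lo hi k m s') \<and> \<not> bval (Less (Reg 6) (Reg 3)) s' \<and> t \<le> ?P s0 + 1"
    then obtain m where m: "CI lo hi k m s'" by blast
    have "fst s' 6 = int m" "fst s' 3 = int n" "m \<le> n" using m unfolding CI_def base_def by (auto simp del: of_nat_mult)
    hence mn: "m = n" using a by (simp del: of_nat_mult)
    have "(\<forall>m'<n. \<not> bad k (cel m')) \<longleftrightarrow> Good h w x0 y0 k"
    proof
      assume A: "\<forall>m'<n. \<not> bad k (cel m')"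
      show "Good h w x0 y0 k" unfolding Good_def
      proof (intro allI impI)
        fix v assume v: "in_region h w v \<and> snd v = 0 \<and> 0 < x0 v \<and> 0 < y0 v"
        hence "idx v < n" "cel (idx v) = v" using idx_lt by auto
        thus "v \<notin> Lk k" using A v by (metis bad_def)
      qed
    next
      assume G: "Good h w x0 y0 k"
      show "\<forall>m'<n. \<not> bad k (cel m')" using G cel_R unfolding Good_def bad_def by blast
    qed
    thus "base s' \<and> rc s' \<and> fst s' 0 = lo \<and> fst s' 4 = hi \<and> fst s' 5 = int k \<and>
     fst s' 11 = (if Good h w x0 y0 k then 1 else 0) \<and> 1 + (1 + t) \<le> 7 * n + 3"
      using m mn a P0 unfolding CI_def by auto
  qed
qed


lemma good_ok:
  assumes "base s" "rc s" "fst s 0 = lo" "fst s 4 = hi" "fst s 5 = int k"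
  shows "runs GOOD s (\<lambda>t s'. base s' \<and> rc s' \<and> fst s' 0 = lo \<and> fst s' 4 = hi \<and> fst s' 5 = int k \<and>
     fst s' 11 = (if Good h w x0 y0 k then 1 else 0) \<and> t \<le> 79 * n + 7)"
  unfolding GOOD_def runs_Seq
proof (rule runs_mono[OF reset_ok[OF assms]])
  fix t1 :: nat and s1 assume a1: "wrel lo hi k s1 ((\<lambda>_. 0), S0k k, sl k n) \<and>
      algo.Inv h w x0 y0 k ((\<lambda>_. 0), S0k k, sl k n) \<and> t1 \<le> 12 * n + 3"
  show "runs WL s1 (\<lambda>t2 s2. runs CHECK s2 (\<lambda>t3 s3. base s3 \<and> rc s3 \<and> fst s3 0 = lo \<and> fst s3 4 = hi \<and> fst s3 5 = int k \<and>
     fst s3 11 = (if Good h w x0 y0 k then 1 else 0) \<and> t1 + (t2 + t3) \<le> 79 * n + 7))"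
  proof (rule runs_mono[OF wl_ok])
    show "wrel lo hi k s1 ((\<lambda>_. 0), S0k k, sl k n)" "algo.Inv h w x0 y0 k ((\<lambda>_. 0), S0k k, sl k n)" using a1 by blast+
  next
    fix t2 :: nat and s2 assume a2: "(\<exists>acc. wrel lo hi k s2 (acc, Lk k, [])) \<and> t2 \<le> 60 * n + 1"
    then obtain acc where W2: "wrel lo hi k s2 (acc, Lk k, [])" by blast
    show "runs CHECK s2 (\<lambda>t3 s3. base s3 \<and> rc s3 \<and> fst s3 0 = lo \<and> fst s3 4 = hi \<and> fst s3 5 = int k \<and>
     fst s3 11 = (if Good h w x0 y0 k then 1 else 0) \<and> t1 + (t2 + t3) \<le> 79 * n + 7)"
      by (rule runs_mono[OF check_ok[OF W2]]) (use a1 a2 in auto)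
  qed
qed

definition BI :: "state \<Rightarrow> bool" where
  "BI s \<longleftrightarrow> base s \<and> rc s \<and> (\<exists>lo hi. fst s 0 = int lo \<and> fst s 4 = int hi \<and> lo \<le> hi \<and>
     Good h w x0 y0 hi \<and> (\<forall>k<lo. \<not> Good h w x0 y0 k))"

definition PB :: "state \<Rightarrow> nat" where
  "PB s = (79 * n + 12) * bits (nat (fst s 4 - fst s 0))"

lemma bs_body:
  assumes "BI s" "bval (Less (Reg 0) (Reg 4)) s"
  shows "runs BSBODY s (\<lambda>t s'. BI s' \<and> t + 1 + PB s' \<le> PB s)"
proof -
  obtain lo hi where B: "base s" "rc s" "fst s 0 = int lo" "fst s 4 = int hi" "lo \<le> hi"
    "Good h w x0 y0 hi" "\<forall>k<lo. \<not> Good h w x0 y0 k" using assms(1) unfolding BI_def by blast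
  have lh: "lo < hi" using assms(2) B by simp
  define mid where "mid = (lo + hi) div 2"
  have mid: "lo \<le> mid" "mid < hi" using lh by (auto simp: mid_def)
  have midi: "(int lo + int hi) div 2 = int mid" by (simp add: mid_def zdiv_int)
  define s1 where "s1 = ((fst s)(5 := int mid), snd s)"
  have b1: "base s1" "rc s1" "fst s1 0 = int lo" "fst s1 4 = int hi" "fst s1 5 = int mid"
    using B by (auto simp: s1_def)
  let ?d = "hi - lo"
  have Pd: "PB s = (79 * n + 12) * bits ?d" unfolding PB_def using B lh by (simp add: nat_diff_distrib)
  have bd: "bits ?d = Suc (bits (?d div 2))" using lh by (subst bits.simps) simp
  have eq: "aval (Half (Add (Reg 0) (Reg 4))) s = int mid" using B midi by simp
  show ?thesis unfolding BSBODY_def runs_Seq runs_Assign eq s1_def[symmetric]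
  proof (rule runs_mono[OF good_ok[OF b1]])
    fix t :: nat and s' assume a: "base s' \<and> rc s' \<and> fst s' 0 = int lo \<and> fst s' 4 = int hi \<and> fst s' 5 = int mid \<and>
       fst s' 11 = (if Good h w x0 y0 mid then 1 else 0) \<and> t \<le> 79 * n + 7"
    show "runs (If (Eq (Reg 11) (Num 1)) (Assign 4 (Reg 5)) (Assign 0 (Add (Reg 5) (Num 1)))) s'
          (\<lambda>t3 s3. BI s3 \<and> 1 + (t + t3) + 1 + PB s3 \<le> PB s)"
    proof (cases "Good h w x0 y0 mid")
      case True
      let ?s3 = "((fst s')(4 := int mid), snd s')"
      have bb: "base ?s3" "rc ?s3" using a by simp_all
      have "BI ?s3" unfolding BI_def
        apply (rule conjI[OF bb(1) conjI[OF bb(2)]])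
        apply (rule exI[of _ lo], rule exI[of _ mid])
        using a True B mid by simp
      moreover have "PB ?s3 = (79 * n + 12) * bits (?d div 2)"
      proof -
        obtain d where d: "hi = lo + d" using B(5) le_Suc_ex by blast
        have "mid - lo = ?d div 2" unfolding mid_def d by simp
        moreover have "nat (int mid - int lo) = mid - lo" using mid by simp
        ultimately show ?thesis unfolding PB_def using a by simp
      qed
      ultimately show ?thesis using True a Pd bd by simp
    next
      case False
      let ?s3 = "((fst s')(0 := int mid + 1), snd s')"
      have nG: "\<forall>k<Suc mid. \<not> Good h w x0 y0 k" using False Good_mono by (metis less_Suc_eq_le)
      have "fst ?s3 0 = int (Suc mid) \<and> fst ?s3 4 = int hi \<and> Suc mid \<le> hi \<and> Good h w x0 y0 hi \<and> (\<forall>k<Suc mid. \<not> Good h w x0 y0 k)"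
        using a B mid nG by simp
      moreover have bb: "base ?s3" "rc ?s3" using a by simp_all
      ultimately have "BI ?s3" unfolding BI_def
        apply (intro conjI[OF bb(1) conjI[OF bb(2)]])
        apply (rule exI[of _ "Suc mid"], rule exI[of _ hi])
        by simp
      moreover have "PB ?s3 \<le> (79 * n + 12) * bits (?d div 2)"
      proof -
        have "nat (int hi - (int mid + 1)) \<le> ?d div 2" using mid by (simp add: mid_def)
        hence "bits (nat (int hi - (int mid + 1))) \<le> bits (?d div 2)" by (rule bits_mono)
        thus ?thesis unfolding PB_def using a by simp
      qed
      ultimately show ?thesis using False a Pd bd by simp
    qed
  qed
qed


lemma bs_ok:
  assumes "base s" "rc s" "fst s 4 = int U" "Good h w x0 y0 U"
  shows "runs BS s (\<lambda>t s'. fst s' 0 = int (LEAST k. Good h w x0 y0 k) \<and> t \<le> (79 * n + 12) * bits U + 2)"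
proof -
  define s0 where "s0 = ((fst s)(0 := 0), snd s)"
  have bb: "base s0" "rc s0" using assms by (simp_all add: s0_def)
  have BI0: "BI s0" unfolding BI_def
    apply (rule conjI[OF bb(1) conjI[OF bb(2)]])
    apply (rule exI[of _ 0], rule exI[of _ U])
    using assms by (simp add: s0_def)
  have P0: "PB s0 = (79 * n + 12) * bits U" unfolding PB_def s0_def using assms by simp
  have r: "runs (While (Less (Reg 0) (Reg 4)) BSBODY) s0 (\<lambda>t s'. BI s' \<and> \<not> bval (Less (Reg 0) (Reg 4)) s' \<and> t \<le> PB s0 + 1)"
    by (rule runs_While[OF BI0 bs_body])
  show ?thesis unfolding BS_def runs_Seq runs_Assign aval.simps s0_def[symmetric]
  proof (rule runs_mono[OF r])
    fix t :: nat and s' assume a: "BI s' \<and> \<not> bval (Less (Reg 0) (Reg 4)) s' \<and> t \<le> PB s0 + 1"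
    then obtain lo hi where b: "fst s' 0 = int lo" "fst s' 4 = int hi" "lo \<le> hi" "Good h w x0 y0 hi"
      "\<forall>k<lo. \<not> Good h w x0 y0 k" unfolding BI_def by blast
    have "lo = hi" using a b by simp
    hence "(LEAST k. Good h w x0 y0 k) = lo" using b by (intro Least_equality) (auto simp: not_less[symmetric])
    thus "fst s' 0 = int (LEAST k. Good h w x0 y0 k) \<and> 1 + t \<le> (79 * n + 12) * bits U + 2"
      using a b P0 by simp
  qed
qed


definition PI :: "nat \<Rightarrow> state \<Rightarrow> bool" where
  "PI m s \<longleftrightarrow> base s \<and> m \<le> n \<and> fst s 6 = int m \<and> fst s 7 = int (m div w) \<and> fst s 8 = int (m mod w) \<and>
     (\<forall>m'<m. snd s (ad 3 (int m')) = int (m' div w) \<and> snd s (ad 4 (int m')) = int (m' mod w)) \<and>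
     fst s 4 = int (\<Sum>m'<m. y0 (cel m'))"

lemma pbody:
  assumes P: "PI m s" and b: "m < n"
  shows "runs PBODY s (\<lambda>t s'. PI (Suc m) s' \<and> t \<le> 8)"
proof -
  have B: "base s" "fst s 6 = int m" "fst s 7 = int (m div w)" "fst s 8 = int (m mod w)"
    and A: "\<forall>m'<m. snd s (ad 3 (int m')) = int (m' div w) \<and> snd s (ad 4 (int m')) = int (m' mod w)"
    and S: "fst s 4 = int (\<Sum>m'<m. y0 (cel m'))"
    using P unfolding PI_def by blast+
  have cR: "cel m \<in> R" using cel_R[OF b] .
  have yc: "snd s (2 + fst s 3 + int m) = int (y0 (cel m))" using base_Y[OF B(1) cR] by simp
  have w2': "fst s 2 = int w" using B(1) by (simp add: base_def)
  have "0 \<le> fst s 3" using B(1) by (simp add: base_def)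
  hence nad: "\<And>j x. 0 \<le> x \<Longrightarrow> 2 + fst s 3 + int m \<noteq> ad j x"
    using ad_neg by (metis add_nonneg_nonneg le_less_trans not_le of_nat_0_le_iff zero_le_numeral)
  show ?thesis
  proof (cases "Suc (m mod w) = w")
    case True
    have dm: "Suc m div w = Suc (m div w)" "Suc m mod w = 0" using True by (simp_all add: div_Suc mod_Suc)
    show ?thesis unfolding PBODY_def PI_def
      using B A S yc w2' True dm b nad by (auto simp: less_Suc_eq)
  next
    case False
    have dm: "Suc m div w = m div w" "Suc m mod w = Suc (m mod w)" using False w0
      by (simp_all add: div_Suc mod_Suc)
    have ne: "int (m mod w) + 1 \<noteq> int w" using False by simp
    show ?thesis unfolding PBODY_def PI_def
      using B A S yc w2' False dm b ne nad by (auto simp: less_Suc_eq)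
  qed
qed

lemma prep_ok:
  assumes "base s"
  shows "runs PREP s (\<lambda>t s'. base s' \<and> rc s' \<and> fst s' 4 = int (\<Sum>m<n. y0 (cel m)) \<and> t \<le> 9 * n + 5)"
proof -
  let ?P = "\<lambda>s. 9 * (n - nat (fst s 6))"
  define s0 where "s0 = ((fst s)(6 := 0, 7 := 0, 8 := 0, 4 := 0), snd s)"
  have PI0: "PI 0 s0" using assms unfolding PI_def s0_def by simp
  have r: "runs (While (Less (Reg 6) (Reg 3)) PBODY) s0 (\<lambda>t s'. (\<exists>m. PI m s') \<and> \<not> bval (Less (Reg 6) (Reg 3)) s' \<and> t \<le> ?P s0 + 1)"
  proof (rule runs_While)
    show "\<exists>m. PI m s0" using PI0 by blast
  next
    fix s assume a: "\<exists>m. PI m s" "bval (Less (Reg 6) (Reg 3)) s"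
    then obtain m where m: "PI m s" by blast
    have "fst s 6 = int m" "fst s 3 = int n" using m unfolding PI_def base_def by (auto simp del: of_nat_mult)
    hence mn: "m < n" using a(2) by (simp del: of_nat_mult)
    show "runs PBODY s (\<lambda>t s'. (\<exists>m. PI m s') \<and> t + 1 + ?P s' \<le> ?P s)"
    proof (rule runs_mono[OF pbody[OF m mn]])
      fix t :: nat and s' assume b: "PI (Suc m) s' \<and> t \<le> 8"
      hence "fst s' 6 = int (Suc m)" unfolding PI_def by blast
      thus "(\<exists>m. PI m s') \<and> t + 1 + ?P s' \<le> ?P s" using b \<open>fst s 6 = int m\<close> mn by auto
    qed
  qed
  have P0: "?P s0 = 9 * n" by (simp add: s0_def)
  show ?thesis unfolding PREP_def runs_Seq runs_Assign
  proof (simp only: prod.collapse fst_conv snd_conv aval.simps s0_def[symmetric], rule runs_mono[OF r])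
    fix t :: nat and s' assume a: "(\<exists>m. PI m s') \<and> \<not> bval (Less (Reg 6) (Reg 3)) s' \<and> t \<le> ?P s0 + 1"
    then obtain m where m: "PI m s'" by blast
    have "fst s' 6 = int m" "fst s' 3 = int n" "m \<le> n" using m unfolding PI_def base_def by (auto simp del: of_nat_mult)
    hence mn: "m = n" using a by (simp del: of_nat_mult)
    thus "base s' \<and> rc s' \<and> fst s' 4 = int (\<Sum>m<n. y0 (cel m)) \<and> 1 + (1 + (1 + (1 + t))) \<le> 9 * n + 5"
      using m a P0 unfolding PI_def rc_def by auto
  qed
qed


definition inp :: "state \<Rightarrow> bool" where
  "inp s \<longleftrightarrow> (\<forall>m<n. snd s (2 + int m) = int (x0 (cel m)) \<and> snd s (2 + int n + int m) = int (y0 (cel m)))"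

definition NI :: "nat \<Rightarrow> state \<Rightarrow> bool" where
  "NI i s \<longleftrightarrow> fst s 1 = int h \<and> fst s 2 = int w \<and> inp s \<and> i \<le> h \<and> fst s 7 = int i \<and> fst s 3 = int (i * w)"

lemma nloop_ok:
  assumes "fst s 1 = int h" "fst s 2 = int w" "inp s"
  shows "runs NLOOP s (\<lambda>t s'. base s' \<and> t \<le> 3 * h + 3)"
proof -
  let ?P = "\<lambda>s. 3 * (h - nat (fst s 7))"
  define s0 where "s0 = ((fst s)(7 := 0, 3 := 0), snd s)"
  have NI0: "NI 0 s0" using assms unfolding NI_def s0_def inp_def by simp
  have r: "runs (While (Less (Reg 7) (Reg 1)) (Seq (Assign 3 (Add (Reg 3) (Reg 2))) (Assign 7 (Add (Reg 7) (Num 1))))) s0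
     (\<lambda>t s'. (\<exists>i. NI i s') \<and> \<not> bval (Less (Reg 7) (Reg 1)) s' \<and> t \<le> ?P s0 + 1)"
  proof (rule runs_While)
    show "\<exists>i. NI i s0" using NI0 by blast
  next
    fix s assume a: "\<exists>i. NI i s" "bval (Less (Reg 7) (Reg 1)) s"
    then obtain i where i: "NI i s" by blast
    have v: "fst s 1 = int h" "fst s 2 = int w" "inp s" "fst s 7 = int i" "fst s 3 = int (i * w)"
      using i unfolding NI_def by blast+
    hence ih: "i < h" using a(2) by simp
    have "NI (Suc i) ((fst s)(3 := int (i * w) + int w, 7 := int i + 1), snd s)"
      using v ih unfolding NI_def inp_def by (simp add: algebra_simps)
    thus "runs (Seq (Assign 3 (Add (Reg 3) (Reg 2))) (Assign 7 (Add (Reg 7) (Num 1)))) s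
       (\<lambda>t s'. (\<exists>i. NI i s') \<and> t + 1 + ?P s' \<le> ?P s)"
      using v ih by (auto intro!: exI[of _ "Suc i"])
  qed
  have P0: "?P s0 = 3 * h" by (simp add: s0_def)
  show ?thesis unfolding NLOOP_def runs_Seq runs_Assign
  proof (simp only: prod.collapse fst_conv snd_conv aval.simps s0_def[symmetric], rule runs_mono[OF r])
    fix t :: nat and s' assume a: "(\<exists>i. NI i s') \<and> \<not> bval (Less (Reg 7) (Reg 1)) s' \<and> t \<le> ?P s0 + 1"
    then obtain i where i: "NI i s'" by blast
    hence "i = h" using a unfolding NI_def by auto
    hence "base s'" using i unfolding NI_def base_def inp_def by auto
    thus "base s' \<and> 1 + (1 + t) \<le> 3 * h + 3" using a P0 by simp
  qed
qed

definition U :: nat where "U = (\<Sum>m<n. y0 (cel m))"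

lemma U_sum: "U = (\<Sum>c\<in>R. y0 c)"
proof -
  have "inj_on cel {..<n}" by (metis idx_cel inj_onI)
  moreover have "cel ` {..<n} = R"
  proof
    show "cel ` {..<n} \<subseteq> R" using cel_R by auto
    show "R \<subseteq> cel ` {..<n}"
    proof
      fix c assume "c \<in> R" thus "c \<in> cel ` {..<n}" using idx_lt by (metis cel_idx image_eqI lessThan_iff)
    qed
  qed
  ultimately show ?thesis unfolding U_def by (metis sum.reindex comp_apply sum.cong)
qed

lemma Y_le_U: "Y_bound h w y0 \<le> U"
proof -
  have fin: "finite R" using finite_region by simp
  have "(0,0) \<in> R" using h1 w2 by (simp add: in_region_def)
  hence ne: "R \<noteq> {}" by blast
  have "{(\<Sum>d\<in>nbrs h w c. y0 d) | c. in_region h w c} = (\<lambda>c. \<Sum>d\<in>nbrs h w c. y0 d) ` R" by auto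
  moreover have "\<forall>c\<in>R. (\<Sum>d\<in>nbrs h w c. y0 d) \<le> U"
    unfolding U_sum using fin by (auto intro!: sum_mono2 simp: nbrs_def)
  ultimately show ?thesis unfolding Y_bound_def using fin ne by (simp add: Max_le_iff)
qed

lemma U_le_nY: "U \<le> n * Y_bound h w y0"
proof -
  have "\<forall>c\<in>R. y0 c \<le> Y_bound h w y0"
  proof
    fix c assume c: "c \<in> R"
    obtain i j where ij: "c = (i,j)" by (cases c)
    have r: "i < h" "j < w" using c ij by (auto simp: in_region_def)
    define d where "d = (if j + 1 < w then (i, j+1) else (i, j - 1))"
    have dR: "d \<in> R" using r w2 by (auto simp: d_def in_region_def)
    have "c \<in> nbrs h w d" using c r w2 unfolding d_def ij nbrs_def hex_adj_def by auto
    hence "y0 c \<le> (\<Sum>e\<in>nbrs h w d. y0 e)" by (intro member_le_sum) auto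
    also have "\<dots> \<le> Y_bound h w y0" using nbr_sum_le_Y dR by simp
    finally show "y0 c \<le> Y_bound h w y0" .
  qed
  hence "(\<Sum>c\<in>R. y0 c) \<le> (\<Sum>c\<in>R. Y_bound h w y0)" by (intro sum_mono) auto
  thus ?thesis unfolding U_sum using card_R by (simp add: mult.commute)
qed

lemma Good_U: "Good h w x0 y0 U"
  using Good_mono[OF Y_le_U Good_Y[OF w2]] .

lemma main_ok:
  assumes "fst s 1 = int h" "fst s 2 = int w" "inp s"
  shows "runs MAIN s (\<lambda>t s'. fst s' 0 = int (LEAST k. Good h w x0 y0 k) \<and> t \<le> 3 * h + 3 + (9 * n + 5) + ((79 * n + 12) * bits U + 2))"
  unfolding MAIN_def runs_Seq
proof (rule runs_mono[OF nloop_ok[OF assms]])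
  fix t1 :: nat and s1 assume a1: "base s1 \<and> t1 \<le> 3 * h + 3"
  show "runs PREP s1 (\<lambda>t2 s2. runs BS s2 (\<lambda>t3 s3. fst s3 0 = int (LEAST k. Good h w x0 y0 k) \<and>
       t1 + (t2 + t3) \<le> 3 * h + 3 + (9 * n + 5) + ((79 * n + 12) * bits U + 2)))"
  proof (rule runs_mono[OF prep_ok])
    show "base s1" using a1 by blast
  next
    fix t2 :: nat and s2 assume a2: "base s2 \<and> rc s2 \<and> fst s2 4 = int (\<Sum>m<n. y0 (cel m)) \<and> t2 \<le> 9 * n + 5"
    show "runs BS s2 (\<lambda>t3 s3. fst s3 0 = int (LEAST k. Good h w x0 y0 k) \<and>
       t1 + (t2 + t3) \<le> 3 * h + 3 + (9 * n + 5) + ((79 * n + 12) * bits U + 2))"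
      by (rule runs_mono[OF bs_ok[of s2 U]]) (use a1 a2 Good_U in \<open>auto simp: U_def\<close>)
  qed
qed

end


lemma input_x: "m < h * w \<Longrightarrow> snd (input_state h w x0 y0) (2 + int m) = int (x0 (m div w, m mod w))"
proof -
  assume m: "m < h * w"
  have "int m < int (h * w)" using m by linarith
  hence c: "2 + int m \<noteq> 0" "2 + int m \<noteq> 1" "2 \<le> 2 + int m \<and> 2 + int m < 2 + int (h * w)" by auto
  have "nat (2 + int m - 2) = m" by simp
  thus ?thesis using c unfolding input_state_def Let_def snd_conv by presburger
qed

lemma input_y: "m < h * w \<Longrightarrow> snd (input_state h w x0 y0) (2 + int (h * w) + int m) = int (y0 (m div w, m mod w))"
proof -
  assume m: "m < h * w"
  have "int m < int (h * w)" using m by linarith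
  hence c: "2 + int (h * w) + int m \<noteq> 0" "2 + int (h * w) + int m \<noteq> 1"
    "\<not> (2 \<le> 2 + int (h * w) + int m \<and> 2 + int (h * w) + int m < 2 + int (h * w))"
    "2 + int (h * w) \<le> 2 + int (h * w) + int m \<and> 2 + int (h * w) + int m < 2 + 2 * int (h * w)" by auto
  have "nat (2 + int (h * w) + int m - 2 - int (h * w)) = m" by simp
  thus ?thesis using c unfolding input_state_def Let_def snd_conv by presburger
qed

lemma input_inp:
  assumes "ram h w"
  shows "ram.inp h w x0 y0 ((fst (input_state h w x0 y0))(1 := int h, 2 := int w), snd (input_state h w x0 y0))"
  unfolding ram.inp_def[OF assms] ram.cel_def[OF assms] snd_conv
  using input_x[of _ h w x0 y0] input_y[of _ h w x0 y0] by (simp del: of_nat_mult)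

lemma input_01: "snd (input_state h w x0 y0) 0 = int h" "snd (input_state h w x0 y0) 1 = int w"
  "fst (input_state h w x0 y0) = (\<lambda>_. 0)"
  by (auto simp: input_state_def)

theorem theorem1:
  shows "\<exists>P :: com. \<exists>C :: real. \<forall>h w (x0 :: cell \<Rightarrow> nat) (y0 :: cell \<Rightarrow> nat).
    1 \<le> h \<and> 1 \<le> w \<longrightarrow>
    (\<exists>t s. big_step P (input_state h w x0 y0) t s \<and>
       fst s 0 = int (min_protect_k h w x0 y0) \<and>
       real t \<le> C * real (max 2 (h * w)) * log 2 (real (max 2 (h * w)))
                  * log 2 (real (max 2 (Y_bound h w y0))))"
proof (rule exI[of _ PROG], rule exI[of _ "300::real"], intro allI impI)
  fix h w :: nat and x0 y0 :: "cell \<Rightarrow> nat"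
  assume hw: "1 \<le> h \<and> 1 \<le> w"
  let ?s0 = "input_state h w x0 y0"
  let ?N = "real (max 2 (h * w))"
  let ?a = "log 2 (real (max 2 (h * w)))"
  let ?b = "log 2 (real (max 2 (Y_bound h w y0)))"
  have a1: "1 \<le> ?a" by simp
  have b1: "1 \<le> ?b" by simp
  have N2: "2 \<le> ?N" by simp
  have "1 * 1 \<le> ?a * ?b" by (rule mult_mono[OF a1 b1]) (use a1 in auto)
  hence ab: "1 \<le> ?a * ?b" by simp
  have aab: "?a \<le> ?a * ?b" using mult_left_mono[OF b1, of ?a] a1 by simp
  have bab: "?b \<le> ?a * ?b" using mult_right_mono[OF a1, of ?b] b1 by simp
  show "\<exists>t s. big_step PROG ?s0 t s \<and> fst s 0 = int (min_protect_k h w x0 y0) \<and>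
       real t \<le> 300 * ?N * ?a * ?b"
  proof (cases "w = 1")
    case True
    have "runs PROG ?s0 (\<lambda>t s. fst s 0 = 0 \<and> t = 4)"
      unfolding PROG_def using True input_01 by simp
    then obtain t s where r: "big_step PROG ?s0 t s" "fst s 0 = 0" "t = 4" by (auto dest: runs_exists)
    have "real t \<le> 300 * ?N * ?a * ?b"
    proof -
      have "real t = 4" using r by simp
      also have "\<dots> \<le> 300 * ?N * 1" using N2 by simp
      also have "\<dots> \<le> 300 * ?N * (?a * ?b)" using ab N2 by (intro mult_left_mono) auto
      finally show ?thesis by (simp add: mult.assoc)
    qed
    moreover have "min_protect_k h w x0 y0 = 0" using min_k_w1[of h x0 y0] hw True by simp
    ultimately have "fst s 0 = int (min_protect_k h w x0 y0) \<and> real t \<le> 300 * ?N * ?a * ?b" using r by simp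
    thus ?thesis using r(1) by blast
  next
    case False
    hence w2: "2 \<le> w" using hw by simp
    interpret ram h w x0 y0 using w2 hw by unfold_locales auto
    have R: "ram h w" using w2 hw by unfold_locales auto
    let ?s1 = "((fst ?s0)(1 := int h, 2 := int w), snd ?s0)"
    have inp1: "inp ?s1" using input_inp[OF R] .
    have "runs MAIN ?s1 (\<lambda>t s'. fst s' 0 = int (LEAST k. Good h w x0 y0 k) \<and> t \<le> 3 * h + 3 + (9 * n + 5) + ((79 * n + 12) * bits U + 2))"
      by (rule main_ok) (use inp1 in simp_all)
    hence "runs PROG ?s0 (\<lambda>t s'. fst s' 0 = int (LEAST k. Good h w x0 y0 k) \<and> t \<le> 3 + (3 * h + 3 + (9 * n + 5) + ((79 * n + 12) * bits U + 2)))"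
      unfolding PROG_def using w2 input_01 by (simp add: fun_upd_twist)
    then obtain t s where r: "big_step PROG ?s0 t s" "fst s 0 = int (LEAST k. Good h w x0 y0 k)"
      "t \<le> 3 + (3 * h + 3 + (9 * n + 5) + ((79 * n + 12) * bits U + 2))" by (auto dest: runs_exists)
    have mk: "min_protect_k h w x0 y0 = (LEAST k. Good h w x0 y0 k)" using min_k_Good w2 hw by blast
    have n2: "2 \<le> n" using w2 hw by (metis mult_le_mono nat_mult_1)
    have hn: "h \<le> n" using w2 by simp
    have e1: "(79 * n + 12) * bits U = 79 * (n * bits U) + 12 * bits U" by (simp add: algebra_simps)
    have e2: "91 * n * bits U = 91 * (n * bits U)" by simp
    have nb: "bits U \<le> n * bits U" using n2 by (metis le_trans mult_le_mono1 nat_mult_1 one_le_numeral)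
    have tb: "t \<le> 25 * n + 91 * n * bits U" using r(3) hn n2 nb unfolding e1 e2 by linarith
    have Nn: "?N = real n" using n2 by simp
    have bU: "real (bits U) \<le> 3 * ?a * ?b"
    proof (cases "U = 0")
      case True
      thus ?thesis using ab by (simp add: bits.simps)
    next
      case False
      have Y1: "1 \<le> Y_bound h w y0"
      proof (rule ccontr)
        assume "\<not> 1 \<le> Y_bound h w y0"
        hence "Y_bound h w y0 = 0" by simp
        thus False using U_le_nY False by simp
      qed
      have "real (bits U) \<le> log 2 (real U) + 1" using bits_log False by simp
      also have "log 2 (real U) \<le> log 2 (real n * real (Y_bound h w y0))"
      proof -
        have "real U \<le> real (n * Y_bound h w y0)" using U_le_nY by (simp only: of_nat_le_iff)
        hence "real U \<le> real n * real (Y_bound h w y0)" by (simp only: of_nat_mult)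
        moreover have "0 < real U" using False by simp
        ultimately show ?thesis by (intro log_le_cancel_iff[THEN iffD2]) auto
      qed
      also have "\<dots> = log 2 (real n) + log 2 (real (Y_bound h w y0))"
      proof -
        have "real n \<noteq> 0" "real (Y_bound h w y0) \<noteq> 0" using n2 Y1 hw by (simp_all del: of_nat_mult)
        thus ?thesis by (subst log_mult) (simp del: of_nat_mult)
      qed
      also have "log 2 (real n) = ?a" using Nn by simp
      also have "log 2 (real (Y_bound h w y0)) \<le> ?b" using Y1 by simp
      finally have "real (bits U) \<le> ?a + ?b + 1" by simp
      also have "\<dots> \<le> 3 * ?a * ?b" using ab aab bab by simp
      finally show ?thesis .
    qed
    have "real t \<le> real (25 * n + 91 * n * bits U)" using tb by (simp only: of_nat_le_iff)
    hence "real t \<le> 25 * real n + 91 * real n * real (bits U)" by simp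
    also have "\<dots> \<le> 25 * real n * (?a * ?b) + 91 * real n * (3 * ?a * ?b)"
    proof (rule add_mono)
      have "real n * 1 \<le> real n * (?a * ?b)" by (rule mult_left_mono[OF ab]) simp
      thus "25 * real n \<le> 25 * real n * (?a * ?b)" by simp
      show "91 * real n * real (bits U) \<le> 91 * real n * (3 * ?a * ?b)" by (rule mult_left_mono[OF bU]) simp
    qed
    also have "\<dots> \<le> 300 * ?N * ?a * ?b" using Nn ab n2 by (simp add: algebra_simps)
    finally have "fst s 0 = int (min_protect_k h w x0 y0) \<and> real t \<le> 300 * ?N * ?a * ?b" using r mk by simp
    thus ?thesis using r(1) by blast
  qed
qed


end
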